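(* Let $d\ge1$ and $L\ge 1$ be integers and let $\Phi\in\mathbb{R}^{d\times d}$ be arbitrary. Consider the loss $$\mathcal{R}(W_1,\dots,W_L)=\tfrac12\|W_LW_{L-1}\cdots W_1-\Phi\|_F^2,\qquad W_l\in\mathbb{R}^{d\times d},$$ and discrete-time gradient descent with fixed learning rate $\eta>0$, $$W_l(t+1)=W_l(t)-\eta\nabla_l\mathcal{R}(t),\qquad l=1,\dots,L,\ t=0,1,2,\dots,$$ started from the zero-asymmetric initialization $W_l(0)=I$ for $l=1,\dots,L-1$ and $W_L(0)=0$. Let $\phi=\max\{2\|\Phi\|_F,\,3L^{-1/2},\,1\}$. If $$\eta\le\min\left\{(4L^3\phi^6)^{-1},\ (144L^2\phi^4)^{-1}\right\},$$ then $$\mathcal{R}(t)\le\left(1-\frac{\eta}{2}\right)^t\mathcal{R}(0)\qquad\text{for all } t=0,1,2,\dots$$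
   Context: For $l_2\ge l_1$ write $W_{l_2:l_1}=W_{l_2}W_{l_2-1}\cdots W_{l_1}$, and an empty product is the identity matrix $I\in\mathbb{R}^{d\times d}$. The gradient of $\mathcal{R}$ with respect to $W_l$ is $\nabla_l\mathcal{R}=W_{L:l+1}^\intercal(W_{L:1}-\Phi)W_{l-1:1}^\intercal$. $\mathcal{R}(t)$ and $\nabla_l\mathcal{R}(t)$ denote the loss and gradient evaluated at the iterate $(W_1(t),\dots,W_L(t))$. $\|\cdot\|_F$ is the Frobenius norm. *)

theory Defs
  imports "HOL-Analysis.Analysis"
begin

type_synonym 'n mat = "real ^ 'n ^ 'n"

definition frob :: "'n::finite mat \<Rightarrow> real" where
  "frob A = sqrt (\<Sum>i\<in>UNIV. \<Sum>j\<in>UNIV. (A $ i $ j)^2)"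

text \<open>Ordered product W_{l2} W_{l2-1} ... W_{l1}; identity when l2 < l1.\<close>
definition prodW :: "(nat \<Rightarrow> 'n::finite mat) \<Rightarrow> nat \<Rightarrow> nat \<Rightarrow> 'n mat" where
  "prodW W l2 l1 = foldr (\<lambda>A B. A ** B) (map W (rev [l1..<Suc l2])) (mat 1)"

definition loss :: "nat \<Rightarrow> 'n::finite mat \<Rightarrow> (nat \<Rightarrow> 'n mat) \<Rightarrow> real" where
  "loss L Phi W = (1/2) * (frob (prodW W L 1 - Phi))^2"

definition grad :: "nat \<Rightarrow> 'n::finite mat \<Rightarrow> (nat \<Rightarrow> 'n mat) \<Rightarrow> nat \<Rightarrow> 'n mat" where
  "grad L Phi W l =
     transpose (prodW W L (l+1)) ** (prodW W L 1 - Phi) ** transpose (prodW W (l-1) 1)"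

text \<open>Gradient descent iterates from zero-asymmetric initialization
  (W_l(0) = I for l < L, W_L(0) = 0). Only indices 1..L are meaningful.\<close>
primrec gd :: "real \<Rightarrow> nat \<Rightarrow> 'n::finite mat \<Rightarrow> nat \<Rightarrow> nat \<Rightarrow> 'n mat" where
  "gd eta L Phi 0 = (\<lambda>l. if l = L then 0 else mat 1)"
| "gd eta L Phi (Suc t) = (\<lambda>l. gd eta L Phi t l - eta *\<^sub>R grad L Phi (gd eta L Phi t) l)"

end

theory Submission
  imports Defs
begin


definition opn :: "real^'n::finite^'m::finite \<Rightarrow> real" where
  "opn A = onorm (\<lambda>x. A *v x)"

lemma opn_bound: "norm (A *v x) \<le> opn A * norm x"
  unfolding opn_def by (rule onorm) simp

lemma opn_nonneg: "0 \<le> opn A"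
  unfolding opn_def by (rule onorm_pos_le) simp

lemma opn_le: assumes "\<And>x. norm (A *v x) \<le> c * norm x" shows "opn A \<le> c"
  unfolding opn_def by (rule onorm_le) (use assms in auto)

lemma opn_mult: "opn (A ** B) \<le> opn A * opn B"
proof (rule opn_le)
  fix x
  have "norm ((A ** B) *v x) = norm (A *v (B *v x))" by (simp add: matrix_vector_mul_assoc)
  also have "\<dots> \<le> opn A * norm (B *v x)" by (rule opn_bound)
  also have "\<dots> \<le> opn A * (opn B * norm x)" by (rule mult_left_mono[OF opn_bound opn_nonneg])
  finally show "norm ((A ** B) *v x) \<le> opn A * opn B * norm x" by simp
qed

lemma opn_diff: "opn (A - B) \<le> opn A + opn B"
proof (rule opn_le)
  fix x
  have "norm ((A - B) *v x) = norm (A *v x - B *v x)" by (simp add: matrix_vector_mult_diff_rdistrib)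
  also have "\<dots> \<le> norm (A *v x) + norm (B *v x)" by (rule norm_triangle_ineq4)
  also have "\<dots> \<le> opn A * norm x + opn B * norm x" by (intro add_mono opn_bound)
  finally show "norm ((A - B) *v x) \<le> (opn A + opn B) * norm x" by (simp add: algebra_simps)
qed

lemma opn_scale: "opn (c *\<^sub>R A) \<le> \<bar>c\<bar> * opn A"
proof (rule opn_le)
  fix x
  have "norm ((c *\<^sub>R A) *v x) = \<bar>c\<bar> * norm (A *v x)"
    by (simp add: scaleR_matrix_vector_assoc[symmetric])
  also have "\<dots> \<le> \<bar>c\<bar> * (opn A * norm x)" by (rule mult_left_mono[OF opn_bound]) simp
  finally show "norm ((c *\<^sub>R A) *v x) \<le> \<bar>c\<bar> * opn A * norm x" by simp
qed

lemma opn_id: "opn (mat 1 :: real^'n::finite^'n) \<le> 1"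
  by (rule opn_le) simp

lemma matrix_vector_mul_transpose_inner:
  fixes A :: "real^'n::finite^'m::finite"
  shows "inner (A *v x) y = inner x (transpose A *v y)"
proof -
  have "inner x (transpose A *v y) = inner y (A *v x)"
    apply (simp only: transpose_matrix_vector)
    apply (subst inner_commute)
    by (rule dot_lmul_matrix)
  then show ?thesis by (simp add: inner_commute)
qed

lemma norm_transpose_mv_le: "norm (transpose A *v y) \<le> opn A * norm y"
proof -
  have "norm (transpose A *v y) ^ 2 = inner (A *v (transpose A *v y)) y"
    by (simp add: matrix_vector_mul_transpose_inner power2_norm_eq_inner)
  also have "\<dots> \<le> norm (A *v (transpose A *v y)) * norm y" by (rule norm_cauchy_schwarz)
  also have "\<dots> \<le> opn A * norm (transpose A *v y) * norm y"
    by (rule mult_right_mono[OF opn_bound]) simp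
  finally have h: "norm (transpose A *v y) ^ 2 \<le> opn A * norm y * norm (transpose A *v y)"
    by (simp add: algebra_simps)
  show ?thesis
  proof (cases "norm (transpose A *v y) = 0")
    case True then show ?thesis using opn_nonneg[of A] by simp
  next
    case False
    then have "norm (transpose A *v y) > 0" by simp
    with h show ?thesis by (simp add: power2_eq_square)
  qed
qed

lemma opn_transpose: "opn (transpose A) \<le> opn A"
  by (rule opn_le) (rule norm_transpose_mv_le)

lemma opn_transpose_eq: "opn (transpose A) = opn A"
  using opn_transpose[of A] opn_transpose[of "transpose A"] by simp


lemma norm_sq_vec: "(norm (v::'a::real_normed_vector^'n::finite))^2 = (\<Sum>i\<in>UNIV. (norm (v$i))^2)"
  unfolding norm_vec_def L2_set_def by (simp add: sum_nonneg)

lemma norm_sq_rvec: "(norm (v::real^'n::finite))^2 = (\<Sum>i\<in>UNIV. (v$i)^2)"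
  by (simp add: norm_sq_vec)

lemma norm_sq_mat: "(norm (A::real^'n::finite^'m::finite))^2 = (\<Sum>i\<in>UNIV. \<Sum>j\<in>UNIV. (A$i$j)^2)"
  by (simp add: norm_sq_vec norm_sq_rvec)

lemma frob_eq_norm: "frob A = norm A"
  unfolding frob_def using norm_sq_mat[of A] by (metis norm_ge_zero real_sqrt_unique)

lemma row_mult: "((A::real^'k::finite^'m::finite) ** (B::real^'n::finite^'k)) $ i = transpose B *v (A $ i)"
  by (simp add: vec_eq_iff matrix_matrix_mult_def matrix_vector_mult_def transpose_def mult_ac)

lemma mv_component: "(A *v x) $ i = inner (A $ i) x"
  by (rule matrix_vector_mul_component)

lemma norm_mv_frob: "norm ((A::real^'n::finite^'m::finite) *v x) \<le> norm A * norm x"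
proof -
  have "(norm (A *v x))^2 = (\<Sum>i\<in>UNIV. (inner (A$i) x)^2)"
    by (simp add: norm_sq_rvec mv_component)
  also have "\<dots> \<le> (\<Sum>i\<in>UNIV. (norm (A$i))^2 * (norm x)^2)"
  proof (rule sum_mono)
    fix i
    have "\<bar>inner (A$i) x\<bar> \<le> norm (A$i) * norm x" by (rule Cauchy_Schwarz_ineq2)
    then have "\<bar>inner (A$i) x\<bar>^2 \<le> (norm (A$i) * norm x)^2"
      by (rule power_mono) simp
    then show "(inner (A$i) x)^2 \<le> (norm (A$i))^2 * (norm x)^2" by (simp add: power_mult_distrib)
  qed
  also have "\<dots> = (norm A * norm x)^2" by (simp add: norm_sq_vec[of A] power_mult_distrib sum_distrib_right)
  finally show ?thesis by (rule power2_le_imp_le) simp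
qed

lemma opn_le_norm: "opn (A::real^'n::finite^'m::finite) \<le> norm A"
  by (rule opn_le) (rule norm_mv_frob)

lemma norm_transpose: "norm (transpose (A::real^'n::finite^'m::finite)) = norm A"
proof -
  have "(norm (transpose A))^2 = (norm A)^2"
    by (simp add: norm_sq_mat transpose_def) (rule sum.swap)
  then show ?thesis by (simp add: power2_eq_iff_nonneg)
qed

lemma norm_mult_right_opn: "norm ((A::real^'k::finite^'m::finite) ** (B::real^'n::finite^'k)) \<le> norm A * opn B"
proof -
  have "(norm (A ** B))^2 = (\<Sum>i\<in>UNIV. (norm (transpose B *v (A$i)))^2)"
    by (simp add: norm_sq_vec[of "A ** B"] row_mult)
  also have "\<dots> \<le> (\<Sum>i\<in>UNIV. (opn B)^2 * (norm (A$i))^2)"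
  proof (rule sum_mono)
    fix i
    have "norm (transpose B *v (A$i)) \<le> opn B * norm (A$i)" by (rule norm_transpose_mv_le)
    then show "(norm (transpose B *v (A$i)))^2 \<le> (opn B)^2 * (norm (A$i))^2"
      by (metis norm_ge_zero power_mono power_mult_distrib)
  qed
  also have "\<dots> = (norm A * opn B)^2" by (simp add: norm_sq_vec[of A] power_mult_distrib sum_distrib_left mult.commute)
  finally show ?thesis by (rule power2_le_imp_le) (simp add: opn_nonneg)
qed

lemma norm_mult_left_opn: "norm ((A::real^'k::finite^'m::finite) ** (B::real^'n::finite^'k)) \<le> opn A * norm B"
proof -
  have "norm (A ** B) = norm (transpose B ** transpose A)"
    by (metis matrix_transpose_mul norm_transpose)
  also have "\<dots> \<le> norm (transpose B) * opn (transpose A)" by (rule norm_mult_right_opn)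
  finally show ?thesis by (simp add: norm_transpose opn_transpose_eq mult.commute)
qed

lemma inner_mult_left: "inner (E::real^'n::finite^'m::finite) ((A::real^'k::finite^'m) ** X) = inner (transpose A ** E) X"
proof -
  have "inner E (A ** X) = (\<Sum>i\<in>UNIV. \<Sum>j\<in>UNIV. \<Sum>k\<in>UNIV. E$i$j * (A$i$k * X$k$j))"
    by (simp add: inner_vec_def matrix_matrix_mult_def sum_distrib_left)
  also have "\<dots> = (\<Sum>i\<in>UNIV. \<Sum>k\<in>UNIV. \<Sum>j\<in>UNIV. E$i$j * (A$i$k * X$k$j))"
    by (rule sum.cong[OF refl], rule sum.swap)
  also have "\<dots> = (\<Sum>k\<in>UNIV. \<Sum>i\<in>UNIV. \<Sum>j\<in>UNIV. E$i$j * (A$i$k * X$k$j))"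
    by (rule sum.swap)
  also have "\<dots> = (\<Sum>k\<in>UNIV. \<Sum>j\<in>UNIV. \<Sum>i\<in>UNIV. E$i$j * (A$i$k * X$k$j))"
    by (rule sum.cong[OF refl], rule sum.swap)
  also have "\<dots> = inner (transpose A ** E) X"
    by (simp add: inner_vec_def matrix_matrix_mult_def transpose_def sum_distrib_left mult_ac)
  finally show ?thesis .
qed

lemma inner_mult_right: "inner (E::real^'n::finite^'m::finite) (X ** (B::real^'n^'k::finite)) = inner (E ** transpose B) X"
proof -
  have "inner E (X ** B) = (\<Sum>i\<in>UNIV. \<Sum>j\<in>UNIV. \<Sum>k\<in>UNIV. E$i$j * (X$i$k * B$k$j))"
    by (simp add: inner_vec_def matrix_matrix_mult_def sum_distrib_left)
  also have "\<dots> = (\<Sum>i\<in>UNIV. \<Sum>k\<in>UNIV. \<Sum>j\<in>UNIV. E$i$j * (X$i$k * B$k$j))"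
    by (rule sum.cong[OF refl], rule sum.swap)
  also have "\<dots> = inner (E ** transpose B) X"
    by (simp add: inner_vec_def matrix_matrix_mult_def transpose_def sum_distrib_left mult_ac)
  finally show ?thesis .
qed

lemma lower_mult_transpose:
  fixes E :: "real^'n::finite^'m::finite" and P :: "real^'n^'n"
  assumes "\<And>x. c * (norm x)^2 \<le> (norm (P *v x))^2"
  shows "c * (norm E)^2 \<le> (norm (E ** transpose P))^2"
proof -
  have "c * (norm E)^2 = (\<Sum>i\<in>UNIV. c * (norm (E$i))^2)"
    by (simp add: norm_sq_vec[of E] sum_distrib_left)
  also have "\<dots> \<le> (\<Sum>i\<in>UNIV. (norm (P *v (E$i)))^2)" by (rule sum_mono) (rule assms)
  also have "\<dots> = (norm (E ** transpose P))^2" by (simp add: norm_sq_vec[of "E ** transpose P"] row_mult)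
  finally show ?thesis .
qed


lemma mm_diff_left: "(A::real^'k::finite^'m::finite) ** (B - C) = A ** B - A ** (C::real^'n::finite^'k)"
  by (simp add: vec_eq_iff matrix_matrix_mult_def algebra_simps sum_subtractf)

lemma mm_diff_right: "((A::real^'k::finite^'m::finite) - B) ** (C::real^'n::finite^'k) = A ** C - B ** C"
  by (simp add: vec_eq_iff matrix_matrix_mult_def algebra_simps sum_subtractf)

lemma mm_scale_left: "(A::real^'k::finite^'m::finite) ** (c *\<^sub>R (B::real^'n::finite^'k)) = c *\<^sub>R (A ** B)"
  by (simp add: vec_eq_iff matrix_matrix_mult_def sum_distrib_left mult_ac)

lemma mm_scale_right: "(c *\<^sub>R (A::real^'k::finite^'m::finite)) ** (B::real^'n::finite^'k) = c *\<^sub>R (A ** B)"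
  by (simp add: vec_eq_iff matrix_matrix_mult_def sum_distrib_left mult_ac)

lemma mm_add_right: "((A::real^'k::finite^'m::finite) + B) ** (C::real^'n::finite^'k) = A ** C + B ** C"
  by (simp add: vec_eq_iff matrix_matrix_mult_def algebra_simps sum.distrib)

lemma mm_sum_left: "finite S \<Longrightarrow> (A::real^'k::finite^'m::finite) ** sum (f::_\<Rightarrow>real^'n::finite^'k) S = (\<Sum>i\<in>S. A ** f i)"
  by (induction S rule: finite_induct) (simp_all add: matrix_add_ldistrib)

lemma mm_sum_right: "finite S \<Longrightarrow> sum (f::_\<Rightarrow>real^'k::finite^'m::finite) S ** (B::real^'n::finite^'k) = (\<Sum>i\<in>S. f i ** B)"
  by (induction S rule: finite_induct) (simp_all add: mm_add_right)

lemma prodW_empty: "l2 < l1 \<Longrightarrow> prodW W l2 l1 = mat 1"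
  by (simp add: prodW_def)

lemma prodW_step: "l1 \<le> Suc l2 \<Longrightarrow> prodW W (Suc l2) l1 = W (Suc l2) ** prodW W l2 l1"
  by (simp add: prodW_def)

lemma prodW_top: "l1 \<le> l2 \<Longrightarrow> 0 < l2 \<Longrightarrow> prodW W l2 l1 = W l2 ** prodW W (l2 - 1) l1"
  using prodW_step[of l1 "l2 - 1" W] by (cases l2) auto

lemma prodW_bottom: "l1 \<le> l2 \<Longrightarrow> prodW W l2 l1 = prodW W l2 (Suc l1) ** W l1"
proof (induction l2)
  case 0
  then show ?case by (simp add: prodW_def)
next
  case (Suc n)
  show ?case
  proof (cases "l1 = Suc n")
    case True
    then show ?thesis by (simp add: prodW_def)
  next
    case False
    then have "l1 \<le> n" using Suc.prems by simp
    then show ?thesis using Suc.IH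
      by (simp add: prodW_step matrix_mul_assoc)
  qed
qed

lemma prodW_cong: "(\<And>j. l1 \<le> j \<Longrightarrow> j \<le> l2 \<Longrightarrow> V j = W j) \<Longrightarrow> prodW V l2 l1 = prodW W l2 l1"
  unfolding prodW_def by (intro arg_cong2[where f="foldr _"] refl) auto

lemma prodW_split: "l1 \<le> Suc m \<Longrightarrow> m \<le> l2 \<Longrightarrow> prodW W l2 l1 = prodW W l2 (Suc m) ** prodW W m l1"
proof (induction l2)
  case 0
  then show ?case by (simp add: prodW_def)
next
  case (Suc n)
  show ?case
  proof (cases "m = Suc n")
    case True
    then show ?thesis by (simp add: prodW_empty)
  next
    case False
    then have "m \<le> n" using Suc.prems by simp
    then show ?thesis using Suc.IH Suc.prems
      by (simp add: prodW_step matrix_mul_assoc)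
  qed
qed

lemma opn_prodW:
  assumes "0 \<le> c" "\<And>j. l1 \<le> j \<Longrightarrow> j \<le> l2 \<Longrightarrow> opn (W j) \<le> c"
  shows "opn (prodW W l2 l1) \<le> c ^ (Suc l2 - l1)"
  using assms(2)
proof (induction l2)
  case 0
  show ?case
  proof (cases "l1 = 0")
    case True
    then show ?thesis using 0 by (simp add: prodW_def)
  next
    case False
    then show ?thesis by (simp add: prodW_def opn_id)
  qed
next
  case (Suc n)
  show ?case
  proof (cases "l1 \<le> Suc n")
    case True
    have "opn (prodW W (Suc n) l1) \<le> opn (W (Suc n)) * opn (prodW W n l1)"
      using True by (simp add: prodW_step opn_mult)
    also have "\<dots> \<le> c * c ^ (Suc n - l1)"
      by (intro mult_mono Suc.prems Suc.IH) (use True assms(1) opn_nonneg in auto)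
    also have "\<dots> = c ^ (Suc (Suc n) - l1)" using True by (simp add: Suc_diff_le)
    finally show ?thesis .
  next
    case False
    then show ?thesis by (simp add: prodW_empty opn_id)
  qed
qed

lemma prodW_telescope:
  assumes "1 \<le> l1" "l1 \<le> Suc l2"
  shows "prodW V l2 l1 - prodW W l2 l1 =
    (\<Sum>l\<in>{l1..l2}. prodW V l2 (Suc l) ** (V l - W l) ** prodW W (l - 1) l1)"
  using assms(2)
proof (induction l2)
  case 0
  then have "l1 = 1" using assms(1) by simp
  then show ?case by (simp add: prodW_def)
next
  case (Suc n)
  show ?case
  proof (cases "l1 = Suc (Suc n)")
    case True
    then show ?thesis by (simp add: prodW_def)
  next
    case False
    then have le: "l1 \<le> Suc n" using Suc.prems by simp
    have "prodW V (Suc n) l1 - prodW W (Suc n) l1 =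
        (V (Suc n) - W (Suc n)) ** prodW W n l1 + V (Suc n) ** (prodW V n l1 - prodW W n l1)"
      using le by (simp add: prodW_step mm_diff_left mm_diff_right)
    also have "V (Suc n) ** (prodW V n l1 - prodW W n l1) =
        (\<Sum>l\<in>{l1..n}. prodW V (Suc n) (Suc l) ** (V l - W l) ** prodW W (l - 1) l1)"
      using le Suc.IH by (simp add: mm_sum_left prodW_step matrix_mul_assoc)
    also have "{l1..Suc n} = insert (Suc n) {l1..n}" using le by auto
    moreover have "(V (Suc n) - W (Suc n)) ** prodW W n l1 =
        prodW V (Suc n) (Suc (Suc n)) ** (V (Suc n) - W (Suc n)) ** prodW W (Suc n - 1) l1"
      by (simp add: prodW_empty)
    ultimately show ?thesis by simp
  qed
qed


lemma quad_transpose: "inner x (transpose (M::real^'n::finite^'n) *v x) = inner x (M *v x)"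
  by (metis inner_commute matrix_vector_mul_transpose_inner)

lemma grad_identity:
  assumes "1 \<le> l" "Suc l \<le> L"
  shows "transpose (W (Suc l)) ** grad L Phi W (Suc l) = grad L Phi W l ** transpose (W l)"
proof -
  have t1: "transpose (W (Suc l)) ** transpose (prodW W L (Suc (Suc l))) = transpose (prodW W L (Suc l))"
    using prodW_bottom[of "Suc l" L W] assms by (simp add: matrix_transpose_mul)
  have t2: "transpose (prodW W (l - 1) 1) ** transpose (W l) = transpose (prodW W l 1)"
    using prodW_top[of 1 l W] assms by (simp add: matrix_transpose_mul)
  show ?thesis
    unfolding grad_def using t1 t2
    by (simp add: matrix_mul_assoc) (metis matrix_mul_assoc)
qed

lemma norm_diff_sq: "(norm (a - c *\<^sub>R b))^2 = (norm a)^2 - 2 * c * inner a b + c^2 * (norm (b::real^'n::finite))^2"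
  unfolding power2_norm_eq_inner by (simp add: inner_diff_left inner_diff_right inner_commute algebra_simps power2_eq_square)

lemma invariant_step:
  fixes W :: "nat \<Rightarrow> real^'n::finite^'n" and eta :: real and Phi :: "real^'n^'n"
  assumes "1 \<le> l" "Suc l \<le> L"
  defines "V \<equiv> (\<lambda>j. W j - eta *\<^sub>R grad L Phi W j)"
  shows "(norm (transpose (V l) *v x))^2 - (norm (V (Suc l) *v x))^2 =
     (norm (transpose (W l) *v x))^2 - (norm (W (Suc l) *v x))^2
     + eta^2 * ((norm (transpose (grad L Phi W l) *v x))^2 - (norm (grad L Phi W (Suc l) *v x))^2)"
proof -
  let ?G = "grad L Phi W"
  have e1: "transpose (V l) *v x = transpose (W l) *v x - eta *\<^sub>R (transpose (?G l) *v x)"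
    by (simp add: V_def transpose_def vec_eq_iff matrix_vector_mult_def algebra_simps sum_subtractf sum_distrib_left)
  have e2: "V (Suc l) *v x = W (Suc l) *v x - eta *\<^sub>R (?G (Suc l) *v x)"
    by (simp add: V_def vec_eq_iff matrix_vector_mult_def algebra_simps sum_subtractf sum_distrib_left)
  have c1: "inner (transpose (W l) *v x) (transpose (?G l) *v x) = inner x ((W l ** transpose (?G l)) *v x)"
  proof -
    have "inner (transpose (W l) *v x) (transpose (?G l) *v x) = inner (W l *v (transpose (?G l) *v x)) x"
      by (metis inner_commute matrix_vector_mul_transpose_inner)
    then show ?thesis by (metis inner_commute matrix_vector_mul_assoc)
  qed
  have c2: "inner (W (Suc l) *v x) (?G (Suc l) *v x) = inner x ((transpose (W (Suc l)) ** ?G (Suc l)) *v x)"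
    by (simp add: matrix_vector_mul_transpose_inner matrix_vector_mul_assoc)
  have c3: "inner x ((transpose (W (Suc l)) ** ?G (Suc l)) *v x) = inner x ((W l ** transpose (?G l)) *v x)"
    using grad_identity[OF assms(1,2), of W Phi] quad_transpose
    by (metis matrix_transpose_mul transpose_transpose)
  show ?thesis
    unfolding e1 e2 norm_diff_sq c1 c2 c3 by (simp add: algebra_simps)
qed

lemma drift_bound:
  fixes G H :: "real^'n::finite^'n"
  shows "\<bar>eta^2 * ((norm (transpose G *v x))^2 - (norm (H *v x))^2)\<bar> \<le> eta^2 * ((norm G)^2 + (norm H)^2) * (norm x)^2"
proof -
  have a: "(norm (transpose G *v x))^2 \<le> (norm G)^2 * (norm x)^2"
    using norm_mv_frob[of "transpose G" x] by (simp add: norm_transpose power_mult_distrib[symmetric] power_mono)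
  have b: "(norm (H *v x))^2 \<le> (norm H)^2 * (norm x)^2"
    using norm_mv_frob[of H x] by (simp add: power_mult_distrib[symmetric] power_mono)
  have "\<bar>(norm (transpose G *v x))^2 - (norm (H *v x))^2\<bar> \<le> ((norm G)^2 + (norm H)^2) * (norm x)^2"
    using a b by (simp add: abs_le_iff algebra_simps) (smt (verit) zero_le_power2 mult_nonneg_nonneg)
  then show ?thesis by (simp add: abs_mult mult.assoc mult_left_mono)
qed


lemma sq_transfer:
  fixes M :: "real^'n::finite^'n"
  assumes c: "0 \<le> c" and h: "\<And>x. (norm (transpose M *v x))^2 \<le> c * (norm x)^2"
  shows "(norm (M *v x))^2 \<le> c * (norm x)^2"
proof -
  have "opn (transpose M) \<le> sqrt c"
  proof (rule opn_le)
    fix y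
    have "sqrt ((norm (transpose M *v y))^2) \<le> sqrt (c * (norm y)^2)" using h real_sqrt_le_mono by blast
    then show "norm (transpose M *v y) \<le> sqrt c * norm y" by (simp add: real_sqrt_mult)
  qed
  then have "opn M \<le> sqrt c" by (simp add: opn_transpose_eq)
  then have "norm (M *v x) \<le> sqrt c * norm x"
    by (meson order_trans opn_bound mult_right_mono norm_ge_zero)
  then have "(norm (M *v x))^2 \<le> (sqrt c * norm x)^2" by (simp add: power_mono)
  then show ?thesis using c by (simp add: power_mult_distrib)
qed

lemma lower_transfer:
  fixes M :: "real^'n::finite^'n"
  assumes c: "0 < c" and h: "\<And>x. c * (norm x)^2 \<le> (norm (transpose M *v x))^2"
  shows "c * (norm x)^2 \<le> (norm (M *v x))^2"
proof -
  have "inj ((*v) (transpose M))"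
  proof (rule injI)
    fix y z assume "transpose M *v y = transpose M *v z"
    then have "transpose M *v (y - z) = 0" by (simp add: matrix_vector_mult_diff_distrib)
    then have "c * (norm (y - z))^2 \<le> 0" using h[of "y - z"] by simp
    then show "y = z" using c by (simp add: mult_le_0_iff)
  qed
  then obtain B where B: "B ** transpose M = mat 1" using matrix_left_invertible_injective by blast
  then have B2: "transpose M ** B = mat 1" using matrix_left_right_inverse by blast
  have "opn B \<le> 1 / sqrt c"
  proof (rule opn_le)
    fix y
    have "transpose M *v (B *v y) = y" using B2 by (simp add: matrix_vector_mul_assoc)
    then have "c * (norm (B *v y))^2 \<le> (norm y)^2" using h[of "B *v y"] by simp
    then have "sqrt (c * (norm (B *v y))^2) \<le> sqrt ((norm y)^2)" using real_sqrt_le_mono by blast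
    then have "sqrt c * norm (B *v y) \<le> norm y" by (simp add: real_sqrt_mult)
    then show "norm (B *v y) \<le> 1 / sqrt c * norm y" using c by (simp add: field_simps)
  qed
  have TB: "transpose B ** M = mat 1" using B2 by (metis matrix_transpose_mul transpose_mat transpose_transpose)
  have "norm x = norm (transpose B *v (M *v x))" using TB by (simp add: matrix_vector_mul_assoc)
  also have "\<dots> \<le> opn (transpose B) * norm (M *v x)" by (rule opn_bound)
  also have "\<dots> \<le> 1 / sqrt c * norm (M *v x)"
    using mult_right_mono[OF \<open>opn B \<le> 1 / sqrt c\<close> norm_ge_zero[of "M *v x"]] by (simp add: opn_transpose_eq)
  finally have "sqrt c * norm x \<le> norm (M *v x)" using c by (simp add: field_simps)
  then have "(sqrt c * norm x)^2 \<le> (norm (M *v x))^2" by (rule power_mono) (use c in simp)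
  then show ?thesis using c by (simp add: power_mult_distrib)
qed

lemma maximizer:
  fixes M :: "real^'n::finite^'n"
  shows "\<exists>u. norm u = 1 \<and> (\<forall>x. (norm (M *v x))^2 \<le> (norm (M *v u))^2 * (norm x)^2)"
proof -
  have "\<exists>u\<in>sphere (0::real^'n) 1. \<forall>y\<in>sphere 0 1. (norm (M *v y))^2 \<le> (norm (M *v u))^2"
  proof (rule continuous_attains_sup)
    show "compact (sphere (0::real^'n) 1)" by simp
    have "axis undefined 1 \<in> sphere (0::real^'n) 1" by simp
    then show "sphere (0::real^'n) 1 \<noteq> {}" by blast
    show "continuous_on (sphere 0 1) (\<lambda>y. (norm (M *v y))^2)"
      by (intro continuous_intros)
  qed
  then obtain u where u: "norm u = 1" "\<And>y. norm y = 1 \<Longrightarrow> (norm (M *v y))^2 \<le> (norm (M *v u))^2"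
    by auto
  have "(norm (M *v x))^2 \<le> (norm (M *v u))^2 * (norm x)^2" for x
  proof (cases "x = 0")
    case True then show ?thesis by simp
  next
    case False
    let ?y = "(1 / norm x) *\<^sub>R x"
    have "norm ?y = 1" using False by simp
    then have "(norm (M *v ?y))^2 \<le> (norm (M *v u))^2" by (rule u(2))
    moreover have "M *v ?y = (1 / norm x) *\<^sub>R (M *v x)" by (simp add: matrix_vector_mult_scaleR)
    ultimately have "(norm (M *v x))^2 / (norm x)^2 \<le> (norm (M *v u))^2"
      by (simp add: power_divide)
    then show ?thesis using False by (simp add: divide_le_eq)
  qed
  then show ?thesis using u(1) by blast
qed

lemma chain_step:
  fixes M :: "real^'n::finite^'n"
  assumes "y = transpose M *v z" "m * (norm z)^2 \<le> (norm y)^2"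
  shows "m * (norm y)^2 \<le> (norm (M *v y))^2"
proof (cases "m \<le> 0")
  case True
  then show ?thesis by (meson mult_nonpos_nonneg order_trans zero_le_power2)
next
  case False
  show ?thesis
  proof (cases "z = 0")
    case True
    then show ?thesis using assms by simp
  next
    case zn: False
    have "(norm y)^2 = inner (M *v y) z"
      using assms(1) by (simp add: matrix_vector_mul_transpose_inner power2_norm_eq_inner)
    also have "\<dots> \<le> norm (M *v y) * norm z" by (rule norm_cauchy_schwarz)
    finally have i: "(norm y)^2 \<le> norm (M *v y) * norm z" .
    have "m * (norm y)^2 * (norm z)^2 \<le> (norm y)^2 * (norm y)^2"
      using mult_right_mono[OF assms(2), of "(norm y)^2"] by (simp add: mult_ac)
    also have "\<dots> \<le> (norm (M *v y) * norm z)^2"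
      using i by (metis power2_eq_square power_mono zero_le_power2)
    finally have "m * (norm y)^2 * (norm z)^2 \<le> (norm (M *v y))^2 * (norm z)^2"
      by (simp add: power_mult_distrib)
    then show ?thesis using zn by simp
  qed
qed

lemma lower_prodW:
  assumes "0 \<le> c" "\<And>j x. l1 \<le> j \<Longrightarrow> j \<le> l2 \<Longrightarrow> c * (norm x)^2 \<le> (norm (W j *v x))^2"
  shows "c ^ (Suc l2 - l1) * (norm x)^2 \<le> (norm (prodW W l2 l1 *v x))^2"
  using assms(2)
proof (induction l2 arbitrary: x)
  case 0
  show ?case
  proof (cases "l1 = 0")
    case True
    then show ?thesis using 0[of 0 x] by (simp add: prodW_def)
  next
    case False
    then show ?thesis by (simp add: prodW_def)
  qed
next
  case (Suc n)
  show ?case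
  proof (cases "l1 \<le> Suc n")
    case True
    have "c ^ (Suc (Suc n) - l1) * (norm x)^2 = c * (c ^ (Suc n - l1) * (norm x)^2)"
      using True by (simp add: Suc_diff_le)
    also have "\<dots> \<le> c * (norm (prodW W n l1 *v x))^2"
      by (intro mult_left_mono Suc.IH Suc.prems assms(1)) auto
    also have "\<dots> \<le> (norm (W (Suc n) *v (prodW W n l1 *v x)))^2"
      using Suc.prems[of "Suc n"] True by simp
    also have "\<dots> = (norm (prodW W (Suc n) l1 *v x))^2"
      using True by (simp add: prodW_step matrix_vector_mul_assoc)
    finally show ?thesis .
  next
    case False
    then show ?thesis by (simp add: prodW_empty)
  qed
qed


declare transpose_matrix_vector[simp del] vector_transpose_matrix[simp del]

definition invar :: "nat \<Rightarrow> (nat \<Rightarrow> real^'n::finite^'n) \<Rightarrow> (nat \<Rightarrow> real) \<Rightarrow> bool" where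
  "invar L W dr \<longleftrightarrow> (\<forall>l x. 1 \<le> l \<longrightarrow> l < L \<longrightarrow>
     \<bar>(norm (transpose (W l) *v x))^2 - (norm (W (Suc l) *v x))^2 - (if Suc l = L then (norm x)^2 else 0)\<bar>
       \<le> dr l * (norm x)^2)"

definition ps :: "nat \<Rightarrow> (nat \<Rightarrow> real) \<Rightarrow> nat \<Rightarrow> real" where
  "ps L dr l = (\<Sum>k\<in>{l..<L}. dr k)"

lemma ps_Suc: "n < L \<Longrightarrow> ps L dr n = dr n + ps L dr (Suc n)"
  unfolding ps_def by (simp add: sum.atLeast_Suc_lessThan)

lemma ps_last: "ps L dr L = 0"
  unfolding ps_def by simp

lemma ps_le: "(\<And>k. 0 \<le> dr k) \<Longrightarrow> 1 \<le> l \<Longrightarrow> ps L dr l \<le> ps L dr 1"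
  unfolding ps_def by (rule sum_mono2) auto

lemma ps_nonneg: "(\<And>k. 0 \<le> dr k) \<Longrightarrow> 0 \<le> ps L dr l"
  unfolding ps_def by (simp add: sum_nonneg)

lemma invar_up:
  "invar L W dr \<Longrightarrow> 1 \<le> l \<Longrightarrow> l < L \<Longrightarrow>
   (norm (transpose (W l) *v x))^2 \<le> (norm (W (Suc l) *v x))^2 + (if Suc l = L then (norm x)^2 else 0) + dr l * (norm x)^2"
  unfolding invar_def by (drule spec[of _ l], drule spec[of _ x]) (simp add: abs_le_iff)

lemma invar_lo:
  "invar L W dr \<Longrightarrow> 1 \<le> l \<Longrightarrow> l < L \<Longrightarrow>
   (norm (W (Suc l) *v x))^2 + (if Suc l = L then (norm x)^2 else 0) - dr l * (norm x)^2 \<le> (norm (transpose (W l) *v x))^2"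
  unfolding invar_def by (drule spec[of _ l], drule spec[of _ x]) (simp add: abs_le_iff)

lemma upper_chain:
  fixes W :: "nat \<Rightarrow> real^'n::finite^'n"
  assumes inv: "invar L W dr" and nn: "\<And>k. 0 \<le> dr k" and a: "0 \<le> a"
    and top: "\<And>x. (norm (W L *v x))^2 \<le> a * (norm x)^2"
    and l: "1 \<le> l" "l < L"
  shows "(norm (transpose (W l) *v x))^2 \<le> (1 + a + ps L dr l) * (norm x)^2"
proof -
  have "l \<le> L - 1" using l by simp
  then have "\<forall>x. (norm (transpose (W l) *v x))^2 \<le> (1 + a + ps L dr l) * (norm x)^2"
  proof (induction rule: inc_induct)
    case base
    show ?case
    proof
      fix x :: "real^'n"
      have "(norm (transpose (W (L - 1)) *v x))^2 \<le> (norm (W L *v x))^2 + (norm x)^2 + dr (L - 1) * (norm x)^2"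
        using invar_up[OF inv, of "L - 1" x] l by simp
      also have "\<dots> \<le> a * (norm x)^2 + (norm x)^2 + dr (L - 1) * (norm x)^2" using top[of x] by simp
      also have "\<dots> = (1 + a + ps L dr (L - 1)) * (norm x)^2"
        using ps_Suc[of "L - 1" L dr] l by (simp add: ps_last algebra_simps)
      finally show "(norm (transpose (W (L - 1)) *v x))^2 \<le> (1 + a + ps L dr (L - 1)) * (norm x)^2" .
    qed
  next
    case (step n)
    show ?case
    proof
      fix x :: "real^'n"
      have n1: "1 \<le> n" using step l by simp
      have nL: "Suc n \<noteq> L" using step by simp
      have "(norm (transpose (W n) *v x))^2 \<le> (norm (W (Suc n) *v x))^2 + dr n * (norm x)^2"
        using invar_up[OF inv n1, of x] step nL by simp
      also have "(norm (W (Suc n) *v x))^2 \<le> (1 + a + ps L dr (Suc n)) * (norm x)^2"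
        by (rule sq_transfer) (use step a ps_nonneg[OF nn] in \<open>auto intro: add_nonneg_nonneg\<close>)
      finally show "(norm (transpose (W n) *v x))^2 \<le> (1 + a + ps L dr n) * (norm x)^2"
        using ps_Suc[of n L dr] step by (simp add: algebra_simps)
    qed
  qed
  then show ?thesis by blast
qed

lemma lower_chain:
  fixes W :: "nat \<Rightarrow> real^'n::finite^'n"
  assumes inv: "invar L W dr" and nn: "\<And>k. 0 \<le> dr k" and small: "ps L dr 1 < 1"
    and l: "1 \<le> l" "l < L"
  shows "(1 - ps L dr l) * (norm x)^2 \<le> (norm (transpose (W l) *v x))^2"
proof -
  have "l \<le> L - 1" using l by simp
  then have "\<forall>x. (1 - ps L dr l) * (norm x)^2 \<le> (norm (transpose (W l) *v x))^2"
  proof (induction rule: inc_induct)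
    case base
    show ?case
    proof
      fix x :: "real^'n"
      have "(1 - ps L dr (L - 1)) * (norm x)^2 = (norm x)^2 - dr (L - 1) * (norm x)^2"
        using ps_Suc[of "L - 1" L dr] l by (simp add: ps_last algebra_simps)
      also have "\<dots> \<le> (norm (W L *v x))^2 + (norm x)^2 - dr (L - 1) * (norm x)^2" by simp
      also have "\<dots> \<le> (norm (transpose (W (L - 1)) *v x))^2"
        using invar_lo[OF inv, of "L - 1" x] l by simp
      finally show "(1 - ps L dr (L - 1)) * (norm x)^2 \<le> (norm (transpose (W (L - 1)) *v x))^2" .
    qed
  next
    case (step n)
    show ?case
    proof
      fix x :: "real^'n"
      have n1: "1 \<le> n" using step l by simp
      have nL: "Suc n \<noteq> L" using step by simp
      have "ps L dr (Suc n) \<le> ps L dr 1" by (rule ps_le) (use nn in auto)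
      then have pos: "0 < 1 - ps L dr (Suc n)" using small by simp
      have "(1 - ps L dr n) * (norm x)^2 = (1 - ps L dr (Suc n)) * (norm x)^2 - dr n * (norm x)^2"
        using ps_Suc[of n L dr] step by (simp add: algebra_simps)
      also have "(1 - ps L dr (Suc n)) * (norm x)^2 \<le> (norm (W (Suc n) *v x))^2"
        by (rule lower_transfer[OF pos]) (use step in auto)
      also have "(norm (W (Suc n) *v x))^2 - dr n * (norm x)^2 \<le> (norm (transpose (W n) *v x))^2"
        using invar_lo[OF inv n1, of x] step nL by simp
      finally show "(1 - ps L dr n) * (norm x)^2 \<le> (norm (transpose (W n) *v x))^2"
        by simp
    qed
  qed
  then show ?thesis by blast
qed

lemma a_chain:
  fixes W :: "nat \<Rightarrow> real^'n::finite^'n"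
  assumes inv: "invar L W dr" and nn: "\<And>k. 0 \<le> dr k"
    and u: "norm u = 1" and k: "1 \<le> k" "k < L"
  defines "v \<equiv> (\<lambda>j. transpose (prodW W L j) *v u)"
  shows "(1 + (norm (transpose (W L) *v u))^2 - ps L dr k) * (norm (v (Suc k)))^2 \<le> (norm (v k))^2"
proof -
  let ?a = "(norm (transpose (W L) *v u))^2"
  have vstep: "v j = transpose (W j) *v v (Suc j)" if "j \<le> L" for j
    using prodW_bottom[OF that, of W] unfolding v_def
    by (simp add: matrix_transpose_mul matrix_vector_mul_assoc)
  have vtop: "v (Suc L) = u" unfolding v_def by (simp add: prodW_empty)
  have "k \<le> L - 1" using k by simp
  then show ?thesis
  proof (induction rule: inc_induct)
    case base
    have vL: "v L = transpose (W L) *v u" using vstep[of L] vtop by simp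
    have m: "?a * (norm (v L))^2 \<le> (norm (W L *v v L))^2"
      by (rule chain_step[OF vL]) (simp add: u vL)
    have "(1 + ?a - ps L dr (L - 1)) * (norm (v (Suc (L - 1))))^2 =
          ?a * (norm (v L))^2 + (norm (v L))^2 - dr (L - 1) * (norm (v L))^2"
      using ps_Suc[of "L - 1" L dr] k by (simp add: ps_last algebra_simps)
    also have "\<dots> \<le> (norm (W L *v v L))^2 + (norm (v L))^2 - dr (L - 1) * (norm (v L))^2"
      using m by simp
    also have "\<dots> \<le> (norm (transpose (W (L - 1)) *v v L))^2"
      using invar_lo[OF inv, of "L - 1" "v L"] k by simp
    also have "\<dots> = (norm (v (L - 1)))^2" using vstep[of "L - 1"] k by simp
    finally show ?case .
  next
    case (step n)
    have n1: "1 \<le> n" using step k by simp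
    have nL: "Suc n \<noteq> L" using step by simp
    have e1: "v (Suc n) = transpose (W (Suc n)) *v v (Suc (Suc n))" using vstep[of "Suc n"] step by simp
    have m: "(1 + ?a - ps L dr (Suc n)) * (norm (v (Suc n)))^2 \<le> (norm (W (Suc n) *v v (Suc n)))^2"
      by (rule chain_step[OF e1 step.IH])
    have "(1 + ?a - ps L dr n) * (norm (v (Suc n)))^2 =
        (1 + ?a - ps L dr (Suc n)) * (norm (v (Suc n)))^2 - dr n * (norm (v (Suc n)))^2"
      using ps_Suc[of n L dr] step by (simp add: algebra_simps)
    also have "\<dots> \<le> (norm (W (Suc n) *v v (Suc n)))^2 - dr n * (norm (v (Suc n)))^2"
      using m by simp
    also have "\<dots> \<le> (norm (transpose (W n) *v v (Suc n)))^2"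
      using invar_lo[OF inv n1, of "v (Suc n)"] step nL by simp
    also have "\<dots> = (norm (v n))^2" using vstep[of n] step by simp
    finally show ?case .
  qed
qed


lemma pow_le_exp: "0 \<le> x \<Longrightarrow> (1 + x) ^ n \<le> exp (real n * x)"
proof -
  assume x: "0 \<le> x"
  have "(1 + x) ^ n \<le> (exp x) ^ n" by (rule power_mono) (use x in auto)
  also have "\<dots> = exp (real n * x)" by (simp add: exp_of_nat_mult)
  finally show ?thesis .
qed

lemma real_bounds:
  fixes a rho phi :: real and L :: nat
  assumes L: "1 \<le> L" and a: "0 \<le> a" and r: "0 \<le> rho" "48 * real L * rho \<le> 1"
    and phi: "1 \<le> phi" "9 \<le> real L * phi^2"
    and key: "a * (1 + a - rho) ^ (L - 1) \<le> phi^2"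
  shows "a * (1 + a + rho) ^ (L - 1) \<le> 9/8 * phi^2"
    and "(1 + a + rho) ^ (L - 1) \<le> 9/8 * real L * phi^2"
proof -
  have "1 * rho \<le> real L * rho" by (rule mult_right_mono) (use r L in auto)
  then have rL: "rho \<le> 1/48" using r by simp
  have k1: "1 + a + rho \<le> (1 + a - rho) * (1 + 3 * rho)"
  proof -
    have "(1 + a - rho) * (1 + 3 * rho) = 1 + a + rho + rho * (1 + 3 * a - 3 * rho)" by (simp add: algebra_simps)
    moreover have "0 \<le> rho * (1 + 3 * a - 3 * rho)" using r a rL by simp
    ultimately show ?thesis by simp
  qed
  have k2: "(1 + 3 * rho) ^ (L - 1) \<le> 9/8"
  proof -
    have "(1 + 3 * rho) ^ (L - 1) \<le> exp (real (L - 1) * (3 * rho))" by (rule pow_le_exp) (use r in simp)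
    also have "real (L - 1) * (3 * rho) \<le> 1/16"
    proof -
      have "real (L - 1) * (3 * rho) \<le> real L * (3 * rho)" using r by (intro mult_right_mono) auto
      then show ?thesis using r by simp
    qed
    then have "exp (real (L - 1) * (3 * rho)) \<le> exp (1/16)" by simp
    also have "exp (1/16::real) \<le> 1 + 2 * norm (1/16::real)"
      using exp_bound_lemma[of "1/16::real"] by simp
    finally show ?thesis by simp
  qed
  have pos: "0 \<le> 1 + a - rho" using a rL by simp
  have k3: "(1 + a + rho) ^ (L - 1) \<le> 9/8 * (1 + a - rho) ^ (L - 1)"
  proof -
    have "(1 + a + rho) ^ (L - 1) \<le> ((1 + a - rho) * (1 + 3 * rho)) ^ (L - 1)"
      by (rule power_mono[OF k1]) (use a r in simp)
    also have "\<dots> = (1 + a - rho) ^ (L - 1) * (1 + 3 * rho) ^ (L - 1)" by (simp add: power_mult_distrib)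
    also have "\<dots> \<le> (1 + a - rho) ^ (L - 1) * (9/8)" by (rule mult_left_mono[OF k2]) (use pos in simp)
    finally show ?thesis by simp
  qed
  show "a * (1 + a + rho) ^ (L - 1) \<le> 9/8 * phi^2"
  proof -
    have "a * (1 + a + rho) ^ (L - 1) \<le> a * (9/8 * (1 + a - rho) ^ (L - 1))" by (rule mult_left_mono[OF k3 a])
    also have "\<dots> \<le> 9/8 * phi^2" using key by simp
    finally show ?thesis .
  qed
  have k4: "(1 + a - rho) ^ (L - 1) \<le> real L * phi^2"
  proof (cases "1 / real L \<le> a")
    case True
    have "(1 / real L) * (1 + a - rho) ^ (L - 1) \<le> a * (1 + a - rho) ^ (L - 1)"
      by (rule mult_right_mono[OF True]) (use pos in simp)
    then have "(1 / real L) * (1 + a - rho) ^ (L - 1) \<le> phi^2" using key by simp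
    then show ?thesis using L by (simp add: field_simps)
  next
    case False
    have "(1 + a - rho) ^ (L - 1) \<le> (1 + 1 / real L) ^ (L - 1)"
      by (rule power_mono) (use False pos r in auto)
    also have "\<dots> \<le> exp (real (L - 1) * (1 / real L))" by (rule pow_le_exp) simp
    also have "\<dots> \<le> exp 1" using L by (simp add: field_simps)
    also have "\<dots> \<le> 3" by (rule exp_le)
    also have "\<dots> \<le> real L * phi^2" using phi by simp
    finally show ?thesis .
  qed
  show "(1 + a + rho) ^ (L - 1) \<le> 9/8 * real L * phi^2" using k3 k4 by simp
qed


declare transpose_matrix_vector[simp del] vector_transpose_matrix[simp del]

lemma opn_grad: "opn (grad L Phi W l) \<le> opn (prodW W L (Suc l)) * norm (prodW W L 1 - Phi) * opn (prodW W (l - 1) 1)"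
  and norm_grad: "norm (grad L Phi W l) \<le> opn (prodW W L (Suc l)) * norm (prodW W L 1 - Phi) * opn (prodW W (l - 1) 1)"
proof -
  let ?A = "prodW W L (Suc l)" and ?B = "prodW W (l - 1) 1" and ?E = "prodW W L 1 - Phi"
  have "norm (grad L Phi W l) = norm (transpose ?A ** (?E ** transpose ?B))"
    by (simp add: grad_def matrix_mul_assoc)
  also have "\<dots> \<le> opn (transpose ?A) * norm (?E ** transpose ?B)" by (rule norm_mult_left_opn)
  also have "\<dots> \<le> opn ?A * (norm ?E * opn ?B)"
    by (simp add: opn_transpose_eq) (metis mult_left_mono norm_mult_right_opn opn_nonneg opn_transpose_eq)
  finally show n: "norm (grad L Phi W l) \<le> opn ?A * norm ?E * opn ?B" by (simp add: mult.assoc)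
  show "opn (grad L Phi W l) \<le> opn ?A * norm ?E * opn ?B" using n opn_le_norm order_trans by blast
qed

lemma pow_mono_r: "1 \<le> (r::real) \<Longrightarrow> i \<le> j \<Longrightarrow> r ^ i \<le> r ^ j"
  by (rule power_increasing)

context
  fixes W :: "nat \<Rightarrow> real^'n::finite^'n" and L :: nat and s r :: real
  assumes L1: "1 \<le> L" and s0: "0 \<le> s" and r1: "1 \<le> r"
    and hWL: "opn (W L) \<le> s" and hW: "\<And>l. 1 \<le> l \<Longrightarrow> l < L \<Longrightarrow> opn (W l) \<le> r"
begin

lemma opnA_last: "opn (prodW W L (Suc L)) \<le> 1"
  by (simp add: prodW_empty opn_id)

lemma opnB: "1 \<le> l \<Longrightarrow> l \<le> L \<Longrightarrow> opn (prodW W (l - 1) 1) \<le> r ^ (l - 1)"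
  using opn_prodW[of r 1 "l - 1" W] r1 hW by simp

lemma opn_mid: "1 \<le> l \<Longrightarrow> l < k \<Longrightarrow> k \<le> L \<Longrightarrow> opn (prodW W (k - 1) (Suc l)) \<le> r ^ (k - 1 - l)"
  using opn_prodW[of r "Suc l" "k - 1" W] r1 hW by simp

lemma opnA: "1 \<le> l \<Longrightarrow> l < L \<Longrightarrow> opn (prodW W L (Suc l)) \<le> s * r ^ (L - 1 - l)"
proof -
  assume l: "1 \<le> l" "l < L"
  have "prodW W L (Suc l) = W L ** prodW W (L - 1) (Suc l)" using l by (intro prodW_top) auto
  then have "opn (prodW W L (Suc l)) \<le> opn (W L) * opn (prodW W (L - 1) (Suc l))" by (simp add: opn_mult)
  also have "\<dots> \<le> s * r ^ (L - 1 - l)"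
    by (intro mult_mono hWL) (use opn_mid[of l L] l s0 in \<open>auto simp: opn_nonneg\<close>)
  finally show ?thesis .
qed

lemma K_lt: "1 \<le> l \<Longrightarrow> l < L \<Longrightarrow> opn (prodW W L (Suc l)) * opn (prodW W (l - 1) 1) \<le> s * r ^ (L - 1)"
proof -
  assume l: "1 \<le> l" "l < L"
  have "opn (prodW W L (Suc l)) * opn (prodW W (l - 1) 1) \<le> (s * r ^ (L - 1 - l)) * r ^ (l - 1)"
    by (intro mult_mono opnA opnB) (use l s0 r1 in \<open>auto simp: opn_nonneg\<close>)
  also have "\<dots> = s * r ^ (L - 1 - l + (l - 1))" by (simp add: power_add)
  also have "\<dots> \<le> s * r ^ (L - 1)" by (intro mult_left_mono pow_mono_r r1 s0) (use l in auto)
  finally show ?thesis .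
qed

lemma K_last: "opn (prodW W L (Suc L)) * opn (prodW W (L - 1) 1) \<le> r ^ (L - 1)"
proof -
  have "opn (prodW W L (Suc L)) * opn (prodW W (L - 1) 1) \<le> 1 * r ^ (L - 1)"
    by (intro mult_mono opnA_last opnB) (use L1 in \<open>auto simp: opn_nonneg\<close>)
  then show ?thesis by simp
qed

lemma K_le: "1 \<le> l \<Longrightarrow> l \<le> L \<Longrightarrow> opn (prodW W L (Suc l)) * opn (prodW W (l - 1) 1) \<le> (if l = L then r ^ (L - 1) else s * r ^ (L - 1))"
  using K_lt K_last by (cases "l = L") auto

end


declare transpose_matrix_vector[simp del] vector_transpose_matrix[simp del]

lemma opn_add: "opn (A + B) \<le> opn A + opn B"
proof (rule opn_le)
  fix x
  have "norm ((A + B) *v x) = norm (A *v x + B *v x)" by (simp add: matrix_vector_mult_add_rdistrib)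
  also have "\<dots> \<le> norm (A *v x) + norm (B *v x)" by (rule norm_triangle_ineq)
  also have "\<dots> \<le> opn A * norm x + opn B * norm x" by (intro add_mono opn_bound)
  finally show "norm ((A + B) *v x) \<le> (opn A + opn B) * norm x" by (simp add: algebra_simps)
qed

lemma opn_zero: "opn (0::real^'n::finite^'m::finite) = 0"
  by (rule antisym, rule opn_le, simp, rule opn_nonneg)

lemma opn_sum: "finite S \<Longrightarrow> opn (sum (f::_\<Rightarrow>real^'n::finite^'m::finite) S) \<le> (\<Sum>i\<in>S. opn (f i))"
proof (induction S rule: finite_induct)
  case empty
  then show ?case by (simp add: opn_zero)
next
  case (insert x F)
  then show ?case using opn_add[of "f x" "sum f F"] by simp
qed

lemma opn_mm3: "opn ((A::real^'k::finite^'m::finite) ** (B::real^'j::finite^'k) ** (C::real^'n::finite^'j)) \<le> opn A * opn B * opn C"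
  by (meson mult_right_mono opn_mult opn_nonneg order_trans)

lemma norm_mm3: "norm ((A::real^'k::finite^'m::finite) ** (B::real^'j::finite^'k) ** (C::real^'n::finite^'j)) \<le> opn A * norm B * opn C"
proof -
  have "norm (A ** B ** C) \<le> norm (A ** B) * opn C" by (rule norm_mult_right_opn)
  also have "\<dots> \<le> opn A * norm B * opn C" by (rule mult_right_mono[OF norm_mult_left_opn opn_nonneg])
  finally show ?thesis .
qed

lemma pow_2bound:
  fixes r x :: real
  assumes "1 \<le> r" "0 \<le> x" "real n * x \<le> 1/2"
  shows "(r + x) ^ n \<le> 2 * r ^ n"
proof -
  have "x \<le> r * x" using mult_right_mono[of 1 r x] assms by simp
  then have "(r + x) ^ n \<le> (r * (1 + x)) ^ n" by (intro power_mono) (use assms in \<open>auto simp: algebra_simps\<close>)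
  also have "\<dots> = r ^ n * (1 + x) ^ n" by (simp add: power_mult_distrib)
  also have "(1 + x) ^ n \<le> exp (real n * x)" by (rule pow_le_exp) (use assms in auto)
  also have "exp (real n * x) \<le> exp (1/2)" using assms by simp
  also have "exp (1/2::real) \<le> 2" by (rule exp_half_le2)
  finally show ?thesis using assms by (simp add: mult.commute)
qed

lemma opn_V: "opn (W - eta *\<^sub>R G) \<le> opn W + eta * opn G" if "0 \<le> eta"
  using opn_diff[of W "eta *\<^sub>R G"] opn_scale[of eta G] that by simp


declare transpose_matrix_vector[simp del] vector_transpose_matrix[simp del]

lemma mono5:
  fixes a b c d f A B C D F :: real
  assumes "0 \<le> a" "a \<le> A" "0 \<le> b" "b \<le> B" "0 \<le> c" "c \<le> C" "0 \<le> d" "d \<le> D" "0 \<le> f" "f \<le> F"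
  shows "a * b * c * d * f \<le> A * B * C * D * F"
proof -
  have "0 \<le> A" "0 \<le> B" "0 \<le> C" "0 \<le> D" using assms by linarith+
  then show ?thesis using assms by (intro mult_mono) (auto intro!: mult_nonneg_nonneg)
qed

lemma rpow3: "1 \<le> (r::real) \<Longrightarrow> a + b + c \<le> n \<Longrightarrow> r ^ a * r ^ b * r ^ c \<le> r ^ n"
  by (metis power_add power_increasing)

context
  fixes W :: "nat \<Rightarrow> real^'n::finite^'n" and L :: nat and s r :: real and Phi :: "real^'n^'n" and eta phi :: real
  assumes L1: "1 \<le> L" and s0: "0 \<le> s" and r1: "1 \<le> r"
    and hWL: "opn (W L) \<le> s" and hW: "\<And>l. 1 \<le> l \<Longrightarrow> l < L \<Longrightarrow> opn (W l) \<le> r"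
    and sig: "\<And>x. 47/48 * (norm x)^2 \<le> (norm (prodW W (L - 1) 1 *v x))^2"
    and Gam: "s * r^(L-1) \<le> 9/8 * phi"
    and bet: "(r^(L-1))^2 \<le> 9/8 * real L * phi^2"
    and Ebd: "norm (prodW W L 1 - Phi) \<le> phi / 2"
    and eta0: "0 < eta" and eta1: "eta * real L^2 * phi^4 \<le> 1/144" and eta2: "eta * real L^3 * phi^4 \<le> 1/4"
    and phi1: "1 \<le> phi"
begin

lemmas K_le' = K_le[where W=W and L=L and s=s and r=r, OF L1 s0 r1 hWL hW]
lemmas K_lt' = K_lt[where W=W and L=L and s=s and r=r, OF L1 s0 r1 hWL hW]
lemmas K_last' = K_last[where W=W and L=L and s=s and r=r, OF L1 s0 r1 hWL hW]

lemma Kprod_nonneg: "0 \<le> opn (prodW W L (Suc l)) * opn (prodW W (l - 1) 1)"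
  by (simp add: opn_nonneg)

lemma GamK: "1 \<le> l \<Longrightarrow> l < L \<Longrightarrow> opn (prodW W L (Suc l)) * opn (prodW W (l - 1) 1) \<le> 9/8 * phi"
  using K_lt' Gam order_trans by blast

lemma betK: "opn (prodW W L (Suc L)) * opn (prodW W (L - 1) 1) \<le> r^(L-1)"
  by (rule K_last')

lemma normG_K: "norm (grad L Phi W l) \<le> (opn (prodW W L (Suc l)) * opn (prodW W (l - 1) 1)) * norm (prodW W L 1 - Phi)"
  using norm_grad[of L Phi W l] by (simp add: mult_ac)

lemma opnG_K: "opn (grad L Phi W l) \<le> (opn (prodW W L (Suc l)) * opn (prodW W (l - 1) 1)) * norm (prodW W L 1 - Phi)"
  using opn_grad[of L Phi W l] by (simp add: mult_ac)

lemma normG_lt: "1 \<le> l \<Longrightarrow> l < L \<Longrightarrow> norm (grad L Phi W l) \<le> 9/8 * phi * norm (prodW W L 1 - Phi)"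
  using normG_K[of l] GamK[of l] by (meson mult_right_mono norm_ge_zero order_trans)

lemma opnG_lt: "1 \<le> l \<Longrightarrow> l < L \<Longrightarrow> opn (grad L Phi W l) \<le> 9/8 * phi * norm (prodW W L 1 - Phi)"
  using opnG_K[of l] GamK[of l] by (meson mult_right_mono norm_ge_zero order_trans)

lemma normG_L: "norm (grad L Phi W L) \<le> r^(L-1) * norm (prodW W L 1 - Phi)"
  using normG_K[of L] betK by (meson mult_right_mono norm_ge_zero order_trans)

lemma opnG_L: "opn (grad L Phi W L) \<le> r^(L-1) * norm (prodW W L 1 - Phi)"
  using opnG_K[of L] betK by (meson mult_right_mono norm_ge_zero order_trans)

lemma sq_le: "0 \<le> (a::real) \<Longrightarrow> a \<le> b \<Longrightarrow> a^2 \<le> b^2"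
  by (rule power_mono)

lemma sumG: "(\<Sum>l\<in>{1..L}. (norm (grad L Phi W l))^2) \<le> 3 * real L * phi^2 * (norm (prodW W L 1 - Phi))^2"
proof -
  let ?e = "norm (prodW W L 1 - Phi)"
  have set: "{1..L} = insert L {1..<L}" using L1 by auto
  have "(\<Sum>l\<in>{1..<L}. (norm (grad L Phi W l))^2) \<le> (\<Sum>l\<in>{1..<L}. (9/8 * phi * ?e)^2)"
    by (rule sum_mono, rule sq_le, simp, rule normG_lt) auto
  also have "\<dots> = real (L - 1) * (81/64 * phi^2 * ?e^2)" by (simp add: power2_eq_square algebra_simps)
  finally have a: "(\<Sum>l\<in>{1..<L}. (norm (grad L Phi W l))^2) \<le> real (L - 1) * (81/64 * phi^2 * ?e^2)" .
  have "(norm (grad L Phi W L))^2 \<le> (r^(L-1) * ?e)^2" by (intro sq_le normG_L) simp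
  also have "\<dots> = (r^(L-1))^2 * ?e^2" by (simp add: power_mult_distrib)
  also have "\<dots> \<le> (9/8 * real L * phi^2) * ?e^2" by (intro mult_right_mono bet) simp
  finally have b: "(norm (grad L Phi W L))^2 \<le> 9/8 * real L * phi^2 * ?e^2" .
  have c: "real (L - 1) * (81/64 * phi^2 * ?e^2) \<le> real L * (81/64 * phi^2 * ?e^2)"
    by (intro mult_right_mono) auto
  have "(\<Sum>l\<in>{1..L}. (norm (grad L Phi W l))^2) \<le> real L * (81/64 * phi^2 * ?e^2) + 9/8 * real L * phi^2 * ?e^2"
    unfolding set using a b c by simp
  also have "\<dots> \<le> 3 * real L * phi^2 * ?e^2"
    by (simp add: algebra_simps)
  finally show ?thesis .
qed

lemma F1_norm: "norm (\<Sum>l\<in>{1..L}. prodW W L (Suc l) ** grad L Phi W l ** prodW W (l - 1) 1)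
   \<le> 5/2 * real L * phi^2 * norm (prodW W L 1 - Phi)"
proof -
  let ?e = "norm (prodW W L 1 - Phi)"
  let ?K = "\<lambda>l. opn (prodW W L (Suc l)) * opn (prodW W (l - 1) 1)"
  have trm: "norm (prodW W L (Suc l) ** grad L Phi W l ** prodW W (l - 1) 1) \<le> (?K l)^2 * ?e" for l
  proof -
    have "norm (prodW W L (Suc l) ** grad L Phi W l ** prodW W (l - 1) 1)
       \<le> opn (prodW W L (Suc l)) * norm (grad L Phi W l) * opn (prodW W (l - 1) 1)" by (rule norm_mm3)
    also have "\<dots> = ?K l * norm (grad L Phi W l)" by (simp add: mult_ac)
    also have "\<dots> \<le> ?K l * (?K l * ?e)" by (intro mult_left_mono normG_K Kprod_nonneg)
    finally show ?thesis by (simp add: power2_eq_square mult_ac)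
  qed
  have set: "{1..L} = insert L {1..<L}" using L1 by auto
  have s1: "norm (\<Sum>l\<in>{1..L}. prodW W L (Suc l) ** grad L Phi W l ** prodW W (l - 1) 1)
     \<le> (\<Sum>l\<in>{1..L}. (?K l)^2 * ?e)" by (rule order_trans[OF norm_sum sum_mono[OF trm]])
  have s1': "(\<Sum>l\<in>{1..L}. (?K l)^2 * ?e) = (?K L)^2 * ?e + (\<Sum>l\<in>{1..<L}. (?K l)^2 * ?e)" unfolding set by simp
  have "(\<Sum>l\<in>{1..<L}. (?K l)^2 * ?e) \<le> (\<Sum>l\<in>{1..<L}. (9/8 * phi)^2 * ?e)"
    by (rule sum_mono, rule mult_right_mono, rule sq_le, simp add: opn_nonneg, rule GamK) auto
  also have "\<dots> = real (L - 1) * (81/64 * phi^2 * ?e)" by (simp add: power2_eq_square algebra_simps)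
  also have "\<dots> \<le> real L * (81/64 * phi^2 * ?e)" by (intro mult_right_mono) auto
  finally have s2: "(\<Sum>l\<in>{1..<L}. (?K l)^2 * ?e) \<le> real L * (81/64 * phi^2 * ?e)" .
  have "(?K L)^2 * ?e \<le> (r^(L-1))^2 * ?e" by (intro mult_right_mono sq_le betK) (auto simp: opn_nonneg)
  also have "(r^(L-1))^2 * ?e \<le> 9/8 * real L * phi^2 * ?e" by (intro mult_right_mono bet) simp
  finally have s3: "(?K L)^2 * ?e \<le> 9/8 * real L * phi^2 * ?e" .
  have s4: "9/8 * real L * phi^2 * ?e + real L * (81/64 * phi^2 * ?e) = 153/64 * (real L * phi^2 * ?e)"
    by (simp add: algebra_simps)
  have s5: "0 \<le> real L * phi^2 * ?e" by simp
  show ?thesis using s1 s1' s2 s3 s4 s5 by linarith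
qed

lemma F1_inner: "47/48 * (norm (prodW W L 1 - Phi))^2 \<le>
   inner (prodW W L 1 - Phi) (\<Sum>l\<in>{1..L}. prodW W L (Suc l) ** grad L Phi W l ** prodW W (l - 1) 1)"
proof -
  let ?E = "prodW W L 1 - Phi"
  have trm: "inner ?E (prodW W L (Suc l) ** grad L Phi W l ** prodW W (l - 1) 1) = (norm (grad L Phi W l))^2" for l
  proof -
    have "inner ?E (prodW W L (Suc l) ** grad L Phi W l ** prodW W (l - 1) 1)
        = inner (?E ** transpose (prodW W (l - 1) 1)) (prodW W L (Suc l) ** grad L Phi W l)"
      by (rule inner_mult_right)
    also have "\<dots> = inner (transpose (prodW W L (Suc l)) ** (?E ** transpose (prodW W (l - 1) 1))) (grad L Phi W l)"
      by (rule inner_mult_left)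
    also have "\<dots> = (norm (grad L Phi W l))^2"
      by (simp add: grad_def matrix_mul_assoc power2_norm_eq_inner)
    finally show ?thesis .
  qed
  have set: "{1..L} = insert L {1..<L}" using L1 by auto
  have GL: "grad L Phi W L = ?E ** transpose (prodW W (L - 1) 1)"
    by (simp add: grad_def prodW_empty)
  have "47/48 * (norm ?E)^2 \<le> (norm (grad L Phi W L))^2"
    unfolding GL by (rule lower_mult_transpose) (rule sig)
  also have "\<dots> \<le> (norm (grad L Phi W L))^2 + (\<Sum>l\<in>{1..<L}. (norm (grad L Phi W l))^2)"
    by (simp add: sum_nonneg)
  also have "\<dots> = (\<Sum>l\<in>{1..L}. (norm (grad L Phi W l))^2)" unfolding set by simp
  also have "\<dots> = inner ?E (\<Sum>l\<in>{1..L}. prodW W L (Suc l) ** grad L Phi W l ** prodW W (l - 1) 1)"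
    unfolding inner_sum_right by (rule sum.cong[OF refl], rule trm[symmetric])
  finally show ?thesis .
qed

lemma e_nonneg: "0 \<le> norm (prodW W L 1 - Phi)" by simp

lemma etaLphi2: "eta * real L * phi^2 \<le> 1/144"
proof -
  have "1 \<le> real L" "1 \<le> phi^2" using L1 phi1 by (auto simp: one_le_power)
  then have "1 * 1 \<le> real L * phi^2" by (intro mult_mono) auto
  then have "1 \<le> real L * phi^2" by simp
  have "eta * real L * phi^2 = eta * (real L * phi^2) * 1" by simp
  also have "\<dots> \<le> eta * (real L * phi^2) * (real L * phi^2)" 
    by (intro mult_left_mono) (use \<open>1 \<le> real L * phi^2\<close> eta0 in auto)
  also have "\<dots> = eta * real L^2 * phi^4" by (simp add: power2_eq_square power4_eq_xxxx)
  finally show ?thesis using eta1 by simp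
qed

lemma xsmall: "real n \<le> real L \<Longrightarrow> real n * (eta * (9/8 * phi * norm (prodW W L 1 - Phi))) \<le> 1/2"
proof -
  assume n: "real n \<le> real L"
  let ?e = "norm (prodW W L 1 - Phi)"
  have "real n * (eta * (9/8 * phi * ?e)) \<le> real L * (eta * (9/8 * phi * (phi / 2)))"
    by (intro mult_mono n mult_left_mono) (use Ebd eta0 phi1 in auto)
  also have "\<dots> = 9/16 * (eta * real L * phi^2)" by (simp add: power2_eq_square)
  also have "\<dots> \<le> 9/16 * (1/144)" using etaLphi2 by simp
  finally show ?thesis by simp
qed

lemma opnV_lt: "1 \<le> j \<Longrightarrow> j < L \<Longrightarrow> opn (W j - eta *\<^sub>R grad L Phi W j) \<le> r + eta * (9/8 * phi * norm (prodW W L 1 - Phi))"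
  using opn_V[of eta "W j" "grad L Phi W j"] eta0 hW[of j] opnG_lt[of j]
  by (smt (verit) mult_left_mono)

lemma opnV_L: "opn (W L - eta *\<^sub>R grad L Phi W L) \<le> s + eta * (r^(L-1) * norm (prodW W L 1 - Phi))"
  using opn_V[of eta "W L" "grad L Phi W L"] eta0 hWL opnG_L
  by (smt (verit) mult_left_mono)

lemma opnVprod: "1 \<le> k \<Longrightarrow> k < L \<Longrightarrow>
   opn (prodW (\<lambda>j. W j - eta *\<^sub>R grad L Phi W j) L (Suc k)) \<le> (s + eta * (r^(L-1) * norm (prodW W L 1 - Phi))) * (2 * r ^ (L - 1 - k))"
proof -
  assume k: "1 \<le> k" "k < L"
  let ?V = "\<lambda>j. W j - eta *\<^sub>R grad L Phi W j"
  let ?x = "eta * (9/8 * phi * norm (prodW W L 1 - Phi))"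
  have x0: "0 \<le> ?x" using eta0 phi1 by simp
  have "prodW ?V L (Suc k) = ?V L ** prodW ?V (L - 1) (Suc k)" using k by (intro prodW_top) auto
  then have p1: "opn (prodW ?V L (Suc k)) \<le> opn (?V L) * opn (prodW ?V (L - 1) (Suc k))" by (simp add: opn_mult)
  have p2: "opn (prodW ?V (L - 1) (Suc k)) \<le> (r + ?x) ^ (Suc (L - 1) - Suc k)"
    by (rule opn_prodW) (use x0 r1 opnV_lt k in auto)
  have p3: "(r + ?x) ^ (Suc (L - 1) - Suc k) \<le> 2 * r ^ (Suc (L - 1) - Suc k)"
    by (rule pow_2bound[OF r1 x0 xsmall]) auto
  have p5: "Suc (L - 1) - Suc k = L - 1 - k" using k by simp
  have "opn (?V L) * opn (prodW ?V (L - 1) (Suc k)) \<le> (s + eta * (r^(L-1) * norm (prodW W L 1 - Phi))) * (2 * r ^ (L - 1 - k))"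
    by (rule mult_mono[OF opnV_L]) (use p2 p3 p5 opn_nonneg s0 eta0 r1 in auto)
  with p1 show ?thesis by linarith
qed

lemma Tbound:
  assumes lk: "1 \<le> l" "l < k" "k \<le> L"
  shows "opn (prodW (\<lambda>j. W j - eta *\<^sub>R grad L Phi W j) L (Suc k)) * (eta * opn (grad L Phi W k))
      * opn (prodW W (k - 1) (Suc l)) * norm (grad L Phi W l) * opn (prodW W (l - 1) 1)
    \<le> eta * (5 * real L * phi^3 * (norm (prodW W L 1 - Phi))^2)"
proof -
  let ?V = "\<lambda>j. W j - eta *\<^sub>R grad L Phi W j"
  let ?e = "norm (prodW W L 1 - Phi)"
  let ?b = "r^(L-1)"
  have e0: "0 \<le> ?e" by simp
  have b1: "1 \<le> ?b" using r1 by simp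
  have Gl: "norm (grad L Phi W l) \<le> 9/8 * phi * ?e" using normG_lt lk by simp
  have Bl: "opn (prodW W (l - 1) 1) \<le> r ^ (l - 1)" using opnB[where W=W and L=L and s=s and r=r, OF L1 s0 r1 hWL hW, of l] lk by simp
  have Mid: "opn (prodW W (k - 1) (Suc l)) \<le> r ^ (k - 1 - l)" using opn_mid[where W=W and L=L and s=s and r=r, OF L1 s0 r1 hWL hW, of l k] lk by simp
  have etaLphi3: "eta * (r^(L-1))^2 * ?e \<le> phi / 8"
  proof -
    have "eta * (r^(L-1))^2 * ?e \<le> eta * (9/8 * real L * phi^2) * (phi / 2)"
      by (intro mult_mono mult_left_mono bet Ebd) (use eta0 in auto)
    also have "\<dots> = 9/16 * (eta * real L * phi^2) * phi" by (simp add: algebra_simps)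
    also have "\<dots> \<le> 9/16 * (1/144) * phi" using etaLphi2 phi1 by (intro mult_right_mono) auto
    finally have "eta * (r^(L-1))^2 * ?e \<le> 9/16 * (1/144) * phi" .
    moreover have "0 \<le> eta * (r^(L-1))^2 * ?e" using eta0 by simp
    ultimately show ?thesis using phi1 by linarith
  qed
  show ?thesis
  proof (cases "k = L")
    case True
    have Vk: "opn (prodW ?V L (Suc k)) \<le> 1" using True by (simp add: prodW_empty opn_id)
    have Gk: "eta * opn (grad L Phi W k) \<le> eta * (?b * ?e)" using True opnG_L eta0 by (simp add: mult_left_mono)
    have "opn (prodW ?V L (Suc k)) * (eta * opn (grad L Phi W k)) * opn (prodW W (k - 1) (Suc l)) * norm (grad L Phi W l) * opn (prodW W (l - 1) 1)
       \<le> 1 * (eta * (?b * ?e)) * r ^ (k - 1 - l) * (9/8 * phi * ?e) * r ^ (l - 1)"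
      by (rule mono5[OF _ Vk _ Gk _ Mid _ Gl _ Bl]) (use eta0 in \<open>auto simp: opn_nonneg\<close>)
    also have "\<dots> = (eta * ?b * (9/8 * phi) * ?e^2) * (r ^ (k - 1 - l) * r ^ (l - 1))"
      by (simp add: power2_eq_square mult_ac)
    also have "\<dots> \<le> (eta * ?b * (9/8 * phi) * ?e^2) * ?b"
      by (rule mult_left_mono) (use rpow3[OF r1, of "k - 1 - l" "l - 1" 0 "L - 1"] lk eta0 phi1 b1 in auto)
    also have "\<dots> = (eta * (9/8 * phi) * ?e^2) * ?b^2" by (simp add: power2_eq_square mult_ac)
    also have "\<dots> \<le> (eta * (9/8 * phi) * ?e^2) * (9/8 * real L * phi^2)"
      by (rule mult_left_mono[OF bet]) (use eta0 phi1 in auto)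
    also have "\<dots> = eta * (81/64 * real L * phi^3 * ?e^2)" by (simp add: power2_eq_square power3_eq_cube mult_ac)
    also have "\<dots> \<le> eta * (5 * real L * phi^3 * ?e^2)"
    proof -
      have "81/64 * real L * phi^3 * ?e^2 \<le> 5 * real L * phi^3 * ?e^2"
        using L1 phi1 by (intro mult_right_mono) auto
      then show ?thesis using eta0 by (simp add: mult_left_mono)
    qed
    finally show ?thesis .
  next
    case False
    then have kL: "k < L" using lk by simp
    have Vk: "opn (prodW ?V L (Suc k)) \<le> (s + eta * (?b * ?e)) * (2 * r ^ (L - 1 - k))"
      using opnVprod[of k] kL lk by simp
    have Gk: "eta * opn (grad L Phi W k) \<le> eta * (9/8 * phi * ?e)" using opnG_lt[of k] kL lk eta0 by (simp add: mult_left_mono)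
    have "opn (prodW ?V L (Suc k)) * (eta * opn (grad L Phi W k)) * opn (prodW W (k - 1) (Suc l)) * norm (grad L Phi W l) * opn (prodW W (l - 1) 1)
       \<le> ((s + eta * (?b * ?e)) * (2 * r ^ (L - 1 - k))) * (eta * (9/8 * phi * ?e)) * r ^ (k - 1 - l) * (9/8 * phi * ?e) * r ^ (l - 1)"
      by (rule mono5[OF _ Vk _ Gk _ Mid _ Gl _ Bl]) (use eta0 in \<open>auto simp: opn_nonneg\<close>)
    also have "\<dots> = (2 * eta * (s + eta * (?b * ?e)) * (81/64 * phi^2 * ?e^2)) * (r ^ (L - 1 - k) * r ^ (k - 1 - l) * r ^ (l - 1))"
      by (simp add: power2_eq_square mult_ac)
    also have "\<dots> \<le> (2 * eta * (s + eta * (?b * ?e)) * (81/64 * phi^2 * ?e^2)) * ?b"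
    proof (rule mult_left_mono)
      show "r ^ (L - 1 - k) * r ^ (k - 1 - l) * r ^ (l - 1) \<le> ?b"
        using rpow3[OF r1, of "L - 1 - k" "k - 1 - l" "l - 1" "L - 1"] lk kL by simp
      have "0 \<le> s + eta * (?b * ?e)" using s0 eta0 b1 by simp
      then show "0 \<le> 2 * eta * (s + eta * (?b * ?e)) * (81/64 * phi^2 * ?e^2)" using eta0 by simp
    qed
    also have "\<dots> = (2 * eta * (81/64 * phi^2 * ?e^2)) * (s * ?b + eta * ?b^2 * ?e)"
      by (simp add: power2_eq_square algebra_simps)
    also have "\<dots> \<le> (2 * eta * (81/64 * phi^2 * ?e^2)) * (9/8 * phi + phi / 8)"
      by (rule mult_left_mono) (use Gam etaLphi3 eta0 in auto)
    also have "\<dots> = eta * (405/128 * phi^3 * ?e^2)"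
      by (simp add: power2_eq_square power3_eq_cube algebra_simps)
    also have "\<dots> \<le> eta * (5 * real L * phi^3 * ?e^2)"
    proof -
      have "405/128 * (phi^3 * ?e^2) \<le> (5 * real L) * (phi^3 * ?e^2)"
        using L1 phi1 by (intro mult_right_mono) auto
      then have "405/128 * phi^3 * ?e^2 \<le> 5 * real L * (phi^3 * ?e^2)" by (simp add: mult_ac)
      then show ?thesis using eta0 by (simp add: mult_left_mono mult_ac)
    qed
    finally show ?thesis .
  qed
qed

lemma eta_small: "eta \<le> 1/144"
proof -
  have "1 \<le> real L^2" "1 \<le> phi^4" using L1 phi1 by (auto simp: one_le_power)
  then have "1 * 1 \<le> real L^2 * phi^4" by (intro mult_mono) auto
  then have "1 \<le> real L^2 * phi^4" by simp
  then have "eta * 1 \<le> eta * (real L^2 * phi^4)" using eta0 by (intro mult_left_mono) auto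
  then show ?thesis using eta1 by (simp add: mult_ac)
qed

lemma Hres:
  "norm (prodW (\<lambda>j. W j - eta *\<^sub>R grad L Phi W j) L 1 - prodW W L 1
     + eta *\<^sub>R (\<Sum>l\<in>{1..L}. prodW W L (Suc l) ** grad L Phi W l ** prodW W (l - 1) 1))
   \<le> 5/8 * eta * norm (prodW W L 1 - Phi)"
proof -
  let ?V = "\<lambda>j. W j - eta *\<^sub>R grad L Phi W j"
  let ?G = "grad L Phi W"
  let ?e = "norm (prodW W L 1 - Phi)"
  let ?D = "\<lambda>l. prodW ?V L (Suc l) - prodW W L (Suc l)"
  let ?T = "eta * (5 * real L * phi^3 * ?e^2)"
  have e0: "0 \<le> ?e" by simp
  have tele: "prodW ?V L 1 - prodW W L 1 = (\<Sum>l\<in>{1..L}. prodW ?V L (Suc l) ** (?V l - W l) ** prodW W (l - 1) 1)"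
    by (rule prodW_telescope) (use L1 in auto)
  have term_eq: "prodW ?V L (Suc l) ** (?V l - W l) ** prodW W (l - 1) 1 + eta *\<^sub>R (prodW W L (Suc l) ** ?G l ** prodW W (l - 1) 1)
      = (- eta) *\<^sub>R (?D l ** ?G l ** prodW W (l - 1) 1)" for l
  proof -
    have "?V l - W l = (- eta) *\<^sub>R ?G l" by simp
    have n1: "\<And>(X::real^'n^'n) Y. X ** (- Y) = - (X ** Y)"
      by (simp add: vec_eq_iff matrix_matrix_mult_def sum_negf)
    have n2: "\<And>(X::real^'n^'n) Y. (- X) ** Y = - (X ** Y)"
      by (simp add: vec_eq_iff matrix_matrix_mult_def sum_negf)
    show ?thesis unfolding \<open>?V l - W l = (- eta) *\<^sub>R ?G l\<close>
      by (simp add: mm_scale_left mm_scale_right mm_diff_right n1 n2 algebra_simps)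
  qed
  have eq: "prodW ?V L 1 - prodW W L 1 + eta *\<^sub>R (\<Sum>l\<in>{1..L}. prodW W L (Suc l) ** ?G l ** prodW W (l - 1) 1)
      = (\<Sum>l\<in>{1..L}. (- eta) *\<^sub>R (?D l ** ?G l ** prodW W (l - 1) 1))"
    unfolding tele scaleR_sum_right sum.distrib[symmetric] by (rule sum.cong[OF refl], rule term_eq)
  have Dbound: "opn (?D l) * (norm (?G l) * opn (prodW W (l - 1) 1)) \<le> real L * ?T" if l: "1 \<le> l" "l \<le> L" for l
  proof -
    have teleD: "?D l = (\<Sum>k\<in>{Suc l..L}. prodW ?V L (Suc k) ** (?V k - W k) ** prodW W (k - 1) (Suc l))"
      by (rule prodW_telescope) (use l in auto)
    have "opn (?D l) \<le> (\<Sum>k\<in>{Suc l..L}. opn (prodW ?V L (Suc k) ** (?V k - W k) ** prodW W (k - 1) (Suc l)))"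
      unfolding teleD by (rule opn_sum) simp
    also have "\<dots> \<le> (\<Sum>k\<in>{Suc l..L}. opn (prodW ?V L (Suc k)) * (eta * opn (?G k)) * opn (prodW W (k - 1) (Suc l)))"
    proof (rule sum_mono)
      fix k
      have "opn (?V k - W k) \<le> eta * opn (?G k)"
        using opn_scale[of "- eta" "?G k"] eta0 by simp
      then show "opn (prodW ?V L (Suc k) ** (?V k - W k) ** prodW W (k - 1) (Suc l))
          \<le> opn (prodW ?V L (Suc k)) * (eta * opn (?G k)) * opn (prodW W (k - 1) (Suc l))"
        by (meson opn_mm3 order_trans mult_left_mono mult_right_mono opn_nonneg)
    qed
    finally have o1: "opn (?D l) \<le> (\<Sum>k\<in>{Suc l..L}. opn (prodW ?V L (Suc k)) * (eta * opn (?G k)) * opn (prodW W (k - 1) (Suc l)))" .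
    have "opn (?D l) * (norm (?G l) * opn (prodW W (l - 1) 1))
       \<le> (\<Sum>k\<in>{Suc l..L}. opn (prodW ?V L (Suc k)) * (eta * opn (?G k)) * opn (prodW W (k - 1) (Suc l))) * (norm (?G l) * opn (prodW W (l - 1) 1))"
      by (rule mult_right_mono[OF o1]) (simp add: opn_nonneg)
    also have "\<dots> = (\<Sum>k\<in>{Suc l..L}. opn (prodW ?V L (Suc k)) * (eta * opn (?G k)) * opn (prodW W (k - 1) (Suc l)) * norm (?G l) * opn (prodW W (l - 1) 1))"
      by (subst sum_distrib_right) (simp add: mult_ac)
    also have "\<dots> \<le> (\<Sum>k\<in>{Suc l..L}. ?T)"
      by (rule sum_mono) (rule Tbound, use l in auto)
    also have "\<dots> = real (L - l) * ?T" by simp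
    also have "\<dots> \<le> real L * ?T" using eta0 phi1 by (intro mult_right_mono) auto
    finally show ?thesis .
  qed
  have "norm (prodW ?V L 1 - prodW W L 1 + eta *\<^sub>R (\<Sum>l\<in>{1..L}. prodW W L (Suc l) ** ?G l ** prodW W (l - 1) 1))
      \<le> (\<Sum>l\<in>{1..L}. norm ((- eta) *\<^sub>R (?D l ** ?G l ** prodW W (l - 1) 1)))"
    unfolding eq by (rule norm_sum)
  also have "\<dots> \<le> (\<Sum>l\<in>{1..L}. eta * (real L * ?T))"
  proof (rule sum_mono)
    fix l assume "l \<in> {1..L}"
    then have l: "1 \<le> l" "l \<le> L" by auto
    have "norm ((- eta) *\<^sub>R (?D l ** ?G l ** prodW W (l - 1) 1)) = eta * norm (?D l ** ?G l ** prodW W (l - 1) 1)"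
      using eta0 by simp
    also have "\<dots> \<le> eta * (opn (?D l) * (norm (?G l) * opn (prodW W (l - 1) 1)))"
      using norm_mm3[of "?D l" "?G l" "prodW W (l - 1) 1"] eta0 by (simp add: mult_ac)
    also have "\<dots> \<le> eta * (real L * ?T)" using Dbound[OF l] eta0 by (simp add: mult_left_mono)
    finally show "norm ((- eta) *\<^sub>R (?D l ** ?G l ** prodW W (l - 1) 1)) \<le> eta * (real L * ?T)" .
  qed
  also have "\<dots> = real L * (eta * (real L * ?T))" by simp
  also have "\<dots> = 5 * (eta * (eta * real L^3 * phi^3 * ?e)) * ?e" by (simp add: power2_eq_square power3_eq_cube mult_ac)
  also have "\<dots> \<le> 5 * (eta * (eta * real L^3 * phi^3 * ?e)) * (phi / 2)"
    by (rule mult_left_mono[OF Ebd]) (use eta0 phi1 in simp)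
  also have "\<dots> = 5/2 * eta * ?e * (eta * real L^3 * phi^4)" by (simp add: power4_eq_xxxx power3_eq_cube mult_ac)
  also have "\<dots> \<le> 5/2 * eta * ?e * (1/4)" by (rule mult_left_mono[OF eta2]) (use eta0 in simp)
  finally show ?thesis by simp
qed

lemma norm_diff_sq_gen: "(norm (a - c *\<^sub>R b))^2 = (norm a)^2 - 2 * c * inner a b + c^2 * (norm (b::'a::real_inner))^2"
  unfolding power2_norm_eq_inner by (simp add: inner_diff_left inner_diff_right inner_commute algebra_simps power2_eq_square)

lemma descent:
  "(norm (prodW (\<lambda>j. W j - eta *\<^sub>R grad L Phi W j) L 1 - Phi))^2 \<le> (1 - eta / 2) * (norm (prodW W L 1 - Phi))^2"
proof -
  let ?V = "\<lambda>j. W j - eta *\<^sub>R grad L Phi W j"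
  let ?E = "prodW W L 1 - Phi"
  let ?e = "norm ?E"
  let ?F = "\<Sum>l\<in>{1..L}. prodW W L (Suc l) ** grad L Phi W l ** prodW W (l - 1) 1"
  let ?H = "prodW ?V L 1 - prodW W L 1 + eta *\<^sub>R ?F"
  have e0: "0 \<le> ?e" by simp
  have es: "eta \<le> 1/144" by (rule eta_small)
  have decomp: "prodW ?V L 1 - Phi = (?E - eta *\<^sub>R ?F) + ?H" by simp
  have Fb: "(norm ?F)^2 \<le> (5/2 * real L * phi^2 * ?e)^2" by (rule sq_le[OF norm_ge_zero F1_norm])
  have "(norm (?E - eta *\<^sub>R ?F))^2 = ?e^2 - 2 * eta * inner ?E ?F + eta^2 * (norm ?F)^2"
    by (rule norm_diff_sq_gen)
  also have "\<dots> \<le> ?e^2 - 2 * eta * (47/48 * ?e^2) + eta^2 * (5/2 * real L * phi^2 * ?e)^2"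
    using F1_inner Fb eta0 by (intro add_mono diff_mono mult_left_mono) auto
  also have "\<dots> = ?e^2 * (1 - 47/24 * eta + 25/4 * eta * (eta * real L^2 * phi^4))"
    by (simp add: power2_eq_square power4_eq_xxxx algebra_simps)
  also have "\<dots> \<le> ?e^2 * (1 - 47/24 * eta + 25/4 * eta * (1/144))"
    using eta1 eta0 by (intro mult_left_mono add_left_mono mult_left_mono) auto
  also have "\<dots> \<le> ?e^2 * (1 - 19/20 * eta)^2"
    using eta0 by (intro mult_left_mono) (auto simp: power2_eq_square algebra_simps)
  finally have "(norm (?E - eta *\<^sub>R ?F))^2 \<le> ((1 - 19/20 * eta) * ?e)^2" by (simp add: power_mult_distrib mult_ac)
  then have n1: "norm (?E - eta *\<^sub>R ?F) \<le> (1 - 19/20 * eta) * ?e"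
    by (rule power2_le_imp_le) (use es e0 in simp)
  have "norm (prodW ?V L 1 - Phi) \<le> norm (?E - eta *\<^sub>R ?F) + norm ?H"
    unfolding decomp by (rule norm_triangle_ineq)
  also have "\<dots> \<le> (1 - 19/20 * eta) * ?e + 5/8 * eta * ?e" using n1 Hres by (rule add_mono)
  also have "\<dots> = (1 - 13/40 * eta) * ?e" by (simp add: algebra_simps)
  finally have n2: "norm (prodW ?V L 1 - Phi) \<le> (1 - 13/40 * eta) * ?e" .
  have "(norm (prodW ?V L 1 - Phi))^2 \<le> ((1 - 13/40 * eta) * ?e)^2"
    by (rule sq_le[OF norm_ge_zero n2])
  also have "\<dots> = (1 - 13/40 * eta)^2 * ?e^2" by (simp add: power_mult_distrib)
  also have "\<dots> \<le> (1 - eta / 2) * ?e^2"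
  proof (rule mult_right_mono)
    have "(1 - 13/40 * eta)^2 = 1 - eta / 2 - eta * (3/20 - 169/1600 * eta)" by (simp add: power2_eq_square algebra_simps)
    moreover have "0 \<le> eta * (3/20 - 169/1600 * eta)" using eta0 es by simp
    ultimately show "(1 - 13/40 * eta)^2 \<le> 1 - eta / 2" by linarith
  qed simp
  finally show ?thesis .
qed

end


declare transpose_matrix_vector[simp del] vector_transpose_matrix[simp del]

lemma phi_facts:
  fixes Phi :: "real^'n::finite^'n"
  assumes L1: "1 \<le> L" and phidef: "phi = max (2 * frob Phi) (max (3 / sqrt (real L)) 1)"
  shows "1 \<le> phi" "2 * norm Phi \<le> phi" "9 \<le> real L * phi^2"
proof -
  show p1: "1 \<le> phi" using phidef by simp
  show "2 * norm Phi \<le> phi" using phidef by (simp add: frob_eq_norm)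
  have "3 / sqrt (real L) \<le> phi" using phidef by simp
  moreover have sL: "0 < sqrt (real L)" using L1 by simp
  ultimately have "3 \<le> phi * sqrt (real L)" by (simp add: divide_le_eq)
  then have "3^2 \<le> (phi * sqrt (real L))^2" by (rule power_mono) simp
  then show "9 \<le> real L * phi^2" by (simp add: power_mult_distrib mult.commute)
qed

lemma eta_facts:
  assumes L1: "1 \<le> L" and p1: "1 \<le> phi" and eta0: "0 < eta"
    and etab: "eta \<le> min (1 / (4 * real L ^ 3 * phi ^ 6)) (1 / (144 * real L ^ 2 * phi ^ 4))"
  shows "eta * real L^2 * phi^4 \<le> 1/144" "eta * real L^3 * phi^4 \<le> 1/4"
proof -
  have pos1: "0 < 144 * real L ^ 2 * phi ^ 4" using L1 p1 by simp
  have "eta \<le> 1 / (144 * real L ^ 2 * phi ^ 4)" using etab by simp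
  then have "eta * (144 * real L ^ 2 * phi ^ 4) \<le> 1" using pos1 by (simp add: le_divide_eq)
  then show "eta * real L^2 * phi^4 \<le> 1/144" by (simp add: mult_ac)
  have pos2: "0 < 4 * real L ^ 3 * phi ^ 6" using L1 p1 by simp
  have "eta \<le> 1 / (4 * real L ^ 3 * phi ^ 6)" using etab by simp
  then have a: "eta * (4 * real L ^ 3 * phi ^ 6) \<le> 1" using pos2 by (simp add: le_divide_eq)
  have "phi^4 \<le> phi^6" using p1 by (intro power_increasing) auto
  then have "eta * (4 * real L ^ 3 * phi ^ 4) \<le> eta * (4 * real L ^ 3 * phi ^ 6)"
    using eta0 by (intro mult_left_mono) auto
  then show "eta * real L^3 * phi^4 \<le> 1/4" using a by (simp add: mult_ac)
qed

lemma good: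
  fixes W :: "nat \<Rightarrow> real^'n::finite^'n" and Phi :: "real^'n^'n"
  assumes L1: "1 \<le> L" and inv: "invar L W dr" and nn: "\<And>k. 0 \<le> dr k"
    and drs: "ps L dr 1 \<le> 1 / (48 * real L)"
    and Eb: "norm (prodW W L 1 - Phi) \<le> norm Phi"
    and phidef: "phi = max (2 * frob Phi) (max (3 / sqrt (real L)) 1)"
    and eta0: "0 < eta"
    and etab: "eta \<le> min (1 / (4 * real L ^ 3 * phi ^ 6)) (1 / (144 * real L ^ 2 * phi ^ 4))"
  shows "(\<Sum>l\<in>{1..L}. (norm (grad L Phi W l))^2) \<le> 3 * real L * phi^2 * (norm (prodW W L 1 - Phi))^2"
    and "(norm (prodW (\<lambda>j. W j - eta *\<^sub>R grad L Phi W j) L 1 - Phi))^2 \<le> (1 - eta / 2) * (norm (prodW W L 1 - Phi))^2"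
proof -
  note pf = phi_facts[OF L1 phidef]
  note ef = eta_facts[OF L1 pf(1) eta0 etab]
  define rho where "rho = ps L dr 1"
  have rho0: "0 \<le> rho" unfolding rho_def by (rule ps_nonneg) (rule nn)
  have rho48: "48 * real L * rho \<le> 1"
  proof -
    have Lp: "0 < 48 * real L" using L1 by simp
    have "rho * (48 * real L) \<le> 1 / (48 * real L) * (48 * real L)"
      by (rule mult_right_mono) (use drs Lp in \<open>auto simp: rho_def\<close>)
    also have "\<dots> = 1" using Lp by simp
    finally show ?thesis by (simp add: mult_ac)
  qed
  have rhoL: "rho \<le> 1/48"
  proof -
    have "1 * rho \<le> real L * rho" by (rule mult_right_mono) (use L1 rho0 in auto)
    then show ?thesis using rho48 by simp
  qed
  have psle: "ps L dr l \<le> rho" if "1 \<le> l" for l unfolding rho_def by (rule ps_le) (use nn that in auto)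
  obtain u where u1: "norm u = 1" and umax: "\<And>x. (norm (transpose (W L) *v x))^2 \<le> (norm (transpose (W L) *v u))^2 * (norm x)^2"
    using maximizer[of "transpose (W L)"] by blast
  define a where "a = (norm (transpose (W L) *v u))^2"
  have a0: "0 \<le> a" unfolding a_def by simp
  have topT: "(norm (transpose (W L) *v x))^2 \<le> a * (norm x)^2" for x using umax unfolding a_def .
  have top: "(norm (W L *v x))^2 \<le> a * (norm x)^2" for x by (rule sq_transfer[OF a0 topT])
  define s where "s = sqrt a"
  define r where "r = sqrt (1 + a + rho)"
  have s0: "0 \<le> s" unfolding s_def using a0 by simp
  have r1: "1 \<le> r"
  proof -
    have "sqrt 1 \<le> sqrt (1 + a + rho)" by (rule real_sqrt_le_mono) (use a0 rho0 in simp)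
    then show ?thesis unfolding r_def by simp
  qed
  have hWL: "opn (W L) \<le> s"
  proof (rule opn_le)
    fix x
    have "(norm (W L *v x))^2 \<le> (sqrt a * norm x)^2" using top[of x] a0 by (simp add: power_mult_distrib)
    then show "norm (W L *v x) \<le> s * norm x" unfolding s_def by (rule power2_le_imp_le) (use a0 in simp)
  qed
  have hW: "opn (W l) \<le> r" if l: "1 \<le> l" "l < L" for l
  proof (rule opn_le)
    fix x
    have "(norm (transpose (W l) *v y))^2 \<le> (1 + a + rho) * (norm y)^2" for y
    proof -
      have "(norm (transpose (W l) *v y))^2 \<le> (1 + a + ps L dr l) * (norm y)^2"
        by (rule upper_chain[OF inv nn a0 top l])
      also have "\<dots> \<le> (1 + a + rho) * (norm y)^2" using psle[OF l(1)] by (intro mult_right_mono) auto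
      finally show ?thesis .
    qed
    have "0 \<le> 1 + a + rho" using a0 rho0 by simp
    from sq_transfer[OF this, of "W l"] \<open>\<And>y. (norm (transpose (W l) *v y))^2 \<le> (1 + a + rho) * (norm y)^2\<close>
    have "(norm (W l *v x))^2 \<le> (1 + a + rho) * (norm x)^2" by blast
    then have "(norm (W l *v x))^2 \<le> (sqrt (1 + a + rho) * norm x)^2" using a0 rho0 by (simp add: power_mult_distrib)
    then show "norm (W l *v x) \<le> r * norm x" unfolding r_def by (rule power2_le_imp_le) (use a0 rho0 in simp)
  qed
  have small: "ps L dr 1 < 1" using rhoL unfolding rho_def by simp
  have lowW: "(1 - rho) * (norm x)^2 \<le> (norm (W j *v x))^2" if j: "1 \<le> j" "j \<le> L - 1" for j x
  proof -
    have jL: "j < L" using j L1 by simp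
    have "(1 - rho) * (norm y)^2 \<le> (norm (transpose (W j) *v y))^2" for y
    proof -
      have "(1 - rho) * (norm y)^2 \<le> (1 - ps L dr j) * (norm y)^2" using psle[OF j(1)] by (intro mult_right_mono) auto
      also have "\<dots> \<le> (norm (transpose (W j) *v y))^2" by (rule lower_chain[OF inv nn small j(1) jL])
      finally show ?thesis .
    qed
    moreover have "0 < 1 - rho" using rhoL by simp
    ultimately show ?thesis using lower_transfer[of "1 - rho" "W j" x] by blast
  qed
  have sig: "47/48 * (norm x)^2 \<le> (norm (prodW W (L - 1) 1 *v x))^2" for x
  proof -
    have "(1 - rho) ^ (Suc (L - 1) - 1) * (norm x)^2 \<le> (norm (prodW W (L - 1) 1 *v x))^2"
    proof (rule lower_prodW)
      show "0 \<le> 1 - rho" using rhoL by simp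
    qed (rule lowW)
    moreover have "47/48 \<le> (1 - rho) ^ (L - 1)"
    proof -
      have "1 + real (L - 1) * (- rho) \<le> (1 + (- rho)) ^ (L - 1)" by (rule Bernoulli_inequality) (use rhoL in simp)
      then have "1 - real (L - 1) * rho \<le> (1 - rho) ^ (L - 1)" by simp
      moreover have "real (L - 1) * rho \<le> real L * rho" using rho0 by (intro mult_right_mono) auto
      ultimately show ?thesis using rho48 by linarith
    qed
    then have "47/48 * (norm x)^2 \<le> (1 - rho) ^ (L - 1) * (norm x)^2" by (rule mult_right_mono) simp
    ultimately show ?thesis by simp
  qed
  define v where "v = (\<lambda>j. transpose (prodW W L j) *v u)"
  have vL: "v L = transpose (W L) *v u"
  proof -
    have "prodW W L L = W L ** prodW W (L - 1) L" using L1 by (intro prodW_top) auto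
    also have "prodW W (L - 1) L = mat 1" using L1 by (intro prodW_empty) auto
    finally show ?thesis unfolding v_def by simp
  qed
  have chain: "(1 + a - rho) ^ (L - k) * a \<le> (norm (v k))^2" if "1 \<le> k" "k \<le> L" for k
    using that(2,1)
  proof (induction rule: inc_induct)
    case base
    then show ?case using vL a_def by simp
  next
    case (step n)
    have st: "(1 + a - ps L dr n) * (norm (v (Suc n)))^2 \<le> (norm (v n))^2"
      unfolding v_def a_def by (rule a_chain[OF inv nn u1]) (use step in auto)
    have "(1 + a - rho) ^ (L - n) * a = (1 + a - rho) * ((1 + a - rho) ^ (L - Suc n) * a)"
    proof -
      have "L - n = Suc (L - Suc n)" using step by simp
      then show ?thesis by (simp only: power_Suc mult.assoc)
    qed
    also have "\<dots> \<le> (1 + a - rho) * (norm (v (Suc n)))^2"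
      by (rule mult_left_mono[OF step.IH]) (use step rhoL a0 in auto)
    also have "\<dots> \<le> (1 + a - ps L dr n) * (norm (v (Suc n)))^2"
      using psle[of n] step by (intro mult_right_mono) auto
    also have "\<dots> \<le> (norm (v n))^2" by (rule st)
    finally show ?case .
  qed
  have v1: "norm (v 1) \<le> phi"
  proof -
    have "norm (v 1) \<le> opn (transpose (prodW W L 1)) * norm u" unfolding v_def by (rule opn_bound)
    also have "\<dots> = opn (prodW W L 1)" using u1 by (simp add: opn_transpose_eq)
    also have "\<dots> \<le> norm (prodW W L 1)" by (rule opn_le_norm)
    also have "\<dots> \<le> norm (prodW W L 1 - Phi) + norm Phi" using norm_triangle_sub[of "prodW W L 1" Phi] by simp
    also have "\<dots> \<le> phi" using Eb pf(2) by simp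
    finally show ?thesis .
  qed
  have key: "a * (1 + a - rho) ^ (L - 1) \<le> phi^2"
  proof -
    have "a * (1 + a - rho) ^ (L - 1) \<le> (norm (v 1))^2" using chain[of 1] L1 by (simp add: mult.commute)
    also have "\<dots> \<le> phi^2" by (rule power_mono[OF v1]) simp
    finally show ?thesis .
  qed
  note rb = real_bounds[OF L1 a0 rho0 rho48 pf(1) pf(3) key]
  have rpow: "r ^ (L - 1) = sqrt ((1 + a + rho) ^ (L - 1))" unfolding r_def by (simp add: real_sqrt_power)
  have Gam: "s * r^(L-1) \<le> 9/8 * phi"
  proof -
    have "s * r^(L-1) = sqrt (a * (1 + a + rho) ^ (L - 1))" unfolding s_def rpow by (simp add: real_sqrt_mult)
    also have "\<dots> \<le> sqrt (9/8 * phi^2)" by (rule real_sqrt_le_mono[OF rb(1)])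
    also have "\<dots> \<le> sqrt ((9/8 * phi)^2)" by (rule real_sqrt_le_mono) (simp add: power2_eq_square mult_right_mono)
    also have "\<dots> = 9/8 * phi" using pf(1) by simp
    finally show ?thesis .
  qed
  have bet: "(r^(L-1))^2 \<le> 9/8 * real L * phi^2"
    unfolding rpow using rb(2) a0 rho0 by simp
  have Ebd: "norm (prodW W L 1 - Phi) \<le> phi / 2" using Eb pf(2) by simp
  show "(\<Sum>l\<in>{1..L}. (norm (grad L Phi W l))^2) \<le> 3 * real L * phi^2 * (norm (prodW W L 1 - Phi))^2"
    by (rule sumG[OF L1 s0 r1 hWL hW sig Gam bet Ebd eta0 ef(1) ef(2) pf(1)])
  show "(norm (prodW (\<lambda>j. W j - eta *\<^sub>R grad L Phi W j) L 1 - Phi))^2 \<le> (1 - eta / 2) * (norm (prodW W L 1 - Phi))^2"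
    by (rule descent[OF L1 s0 r1 hWL hW sig Gam bet Ebd eta0 ef(1) ef(2) pf(1)])
qed


declare transpose_matrix_vector[simp del] vector_transpose_matrix[simp del]

definition drf :: "real \<Rightarrow> nat \<Rightarrow> real^'n::finite^'n \<Rightarrow> nat \<Rightarrow> nat \<Rightarrow> real" where
  "drf eta L Phi t l = eta^2 * (\<Sum>s<t. (norm (grad L Phi (gd eta L Phi s) l))^2 + (norm (grad L Phi (gd eta L Phi s) (Suc l)))^2)"

lemma drf_nonneg: "0 \<le> drf eta L Phi t l"
  unfolding drf_def by (simp add: sum_nonneg)

lemma drf_mono: "drf eta L Phi t l \<le> drf eta L Phi (Suc t) l"
  unfolding drf_def by (intro mult_left_mono) (simp_all add: add_nonneg_nonneg)

lemma ps_mono_t: "ps L (drf eta L Phi t) 1 \<le> ps L (drf eta L Phi (Suc t)) 1"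
  unfolding ps_def by (rule sum_mono) (rule drf_mono)

lemma gd0_prod: "1 \<le> L \<Longrightarrow> prodW (gd eta L Phi 0) L 1 = 0"
  using prodW_top[of 1 L "gd eta L Phi 0"] by simp

lemma invar_all:
  fixes Phi :: "real^'n::finite^'n"
  shows "invar L (gd eta L Phi t) (drf eta L Phi t)"
proof (induction t)
  case 0
  show ?case unfolding invar_def drf_def by auto
next
  case (Suc t)
  show ?case unfolding invar_def
  proof (intro allI impI)
    fix l and x :: "real^'n"
    assume l: "1 \<le> l" "l < L"
    let ?W = "gd eta L Phi t"
    let ?c = "if Suc l = L then (norm x)^2 else 0"
    let ?Q = "(norm (transpose (?W l) *v x))^2 - (norm (?W (Suc l) *v x))^2"
    let ?D = "eta^2 * ((norm (transpose (grad L Phi ?W l) *v x))^2 - (norm (grad L Phi ?W (Suc l) *v x))^2)"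
    have step: "(norm (transpose (gd eta L Phi (Suc t) l) *v x))^2 - (norm (gd eta L Phi (Suc t) (Suc l) *v x))^2 = ?Q + ?D"
      using invariant_step[of l L ?W eta Phi x] l by simp
    have old: "\<bar>?Q - ?c\<bar> \<le> drf eta L Phi t l * (norm x)^2"
      using Suc.IH l unfolding invar_def by blast
    have new: "\<bar>?D\<bar> \<le> eta^2 * ((norm (grad L Phi ?W l))^2 + (norm (grad L Phi ?W (Suc l)))^2) * (norm x)^2"
      by (rule drift_bound)
    have "drf eta L Phi (Suc t) l = drf eta L Phi t l + eta^2 * ((norm (grad L Phi ?W l))^2 + (norm (grad L Phi ?W (Suc l)))^2)"
      unfolding drf_def by (simp add: algebra_simps)
    then show "\<bar>(norm (transpose (gd eta L Phi (Suc t) l) *v x))^2 - (norm (gd eta L Phi (Suc t) (Suc l) *v x))^2 - ?c\<bar>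
        \<le> drf eta L Phi (Suc t) l * (norm x)^2"
      unfolding step using old new by (simp add: algebra_simps)
  qed
qed

lemma drift_sum:
  fixes Phi :: "real^'n::finite^'n"
  assumes L1: "1 \<le> L" and eta0: "0 < eta" and es: "eta \<le> 1"
    and p1: "1 \<le> phi" and p2: "2 * norm Phi \<le> phi"
    and e1: "eta * real L^2 * phi^4 \<le> 1/144"
    and C: "\<And>s. s \<le> t \<Longrightarrow> (norm (prodW (gd eta L Phi s) L 1 - Phi))^2 \<le> (1 - eta/2)^s * (norm Phi)^2
        \<and> (\<Sum>l\<in>{1..L}. (norm (grad L Phi (gd eta L Phi s) l))^2) \<le> 3 * real L * phi^2 * (norm (prodW (gd eta L Phi s) L 1 - Phi))^2"
  shows "ps L (drf eta L Phi (Suc t)) 1 \<le> 1 / (48 * real L)"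
proof -
  let ?g = "\<lambda>s l. (norm (grad L Phi (gd eta L Phi s) l))^2"
  let ?q = "1 - eta / 2"
  have q0: "0 \<le> ?q" using es by simp
  have inner: "(\<Sum>l\<in>{1..<L}. ?g s l + ?g s (Suc l)) \<le> 2 * (\<Sum>l\<in>{1..L}. ?g s l)" for s
  proof -
    have a: "(\<Sum>l\<in>{1..<L}. ?g s l) \<le> (\<Sum>l\<in>{1..L}. ?g s l)" by (rule sum_mono2) auto
    have "(\<Sum>l\<in>{1..<L}. ?g s (Suc l)) = (\<Sum>l\<in>{Suc 1..<Suc L}. ?g s l)"
      by (rule sum.shift_bounds_Suc_ivl[symmetric])
    also have "\<dots> \<le> (\<Sum>l\<in>{1..L}. ?g s l)" by (rule sum_mono2) auto
    finally show ?thesis using a by (simp add: sum.distrib)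
  qed
  have "ps L (drf eta L Phi (Suc t)) 1 = eta^2 * (\<Sum>s<Suc t. \<Sum>l\<in>{1..<L}. ?g s l + ?g s (Suc l))"
  proof -
    have "ps L (drf eta L Phi (Suc t)) 1 = eta^2 * (\<Sum>l\<in>{1..<L}. \<Sum>s<Suc t. ?g s l + ?g s (Suc l))"
      unfolding ps_def drf_def by (simp add: sum_distrib_left)
    also have "(\<Sum>l\<in>{1..<L}. \<Sum>s<Suc t. ?g s l + ?g s (Suc l)) = (\<Sum>s<Suc t. \<Sum>l\<in>{1..<L}. ?g s l + ?g s (Suc l))"
      by (rule sum.swap)
    finally show ?thesis .
  qed
  also have "\<dots> \<le> eta^2 * (\<Sum>s<Suc t. 2 * (3 * real L * phi^2 * (?q^s * (norm Phi)^2)))"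
  proof (rule mult_left_mono[OF sum_mono])
    fix s assume "s \<in> {..<Suc t}"
    then have st: "s \<le> t" by simp
    have "(\<Sum>l\<in>{1..<L}. ?g s l + ?g s (Suc l)) \<le> 2 * (\<Sum>l\<in>{1..L}. ?g s l)" by (rule inner)
    also have "\<dots> \<le> 2 * (3 * real L * phi^2 * (norm (prodW (gd eta L Phi s) L 1 - Phi))^2)"
      using C[OF st] by simp
    also have "\<dots> \<le> 2 * (3 * real L * phi^2 * (?q^s * (norm Phi)^2))"
      using C[OF st] by (intro mult_left_mono) auto
    finally show "(\<Sum>l\<in>{1..<L}. ?g s l + ?g s (Suc l)) \<le> 2 * (3 * real L * phi^2 * (?q^s * (norm Phi)^2))" .
  qed simp
  also have "\<dots> = eta^2 * ((6 * real L * phi^2 * (norm Phi)^2) * (\<Sum>s<Suc t. ?q^s))"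
    unfolding sum_distrib_left by (rule sum.cong) (simp_all add: mult_ac del: sum.lessThan_Suc)
  also have "\<dots> = 6 * eta^2 * real L * phi^2 * (norm Phi)^2 * (\<Sum>s<Suc t. ?q^s)"
    by (simp only: mult_ac)
  also have "(\<Sum>s<Suc t. ?q^s) \<le> 2 / eta"
  proof -
    have "?q \<noteq> 1" using eta0 by simp
    then have "(\<Sum>s<Suc t. ?q^s) = (1 - ?q^Suc t) / (1 - ?q)" by (simp add: sum_gp_strict del: sum.lessThan_Suc)
    also have "\<dots> \<le> 1 / (1 - ?q)" using eta0 q0 by (intro divide_right_mono) auto
    also have "\<dots> = 2 / eta" by simp
    finally show ?thesis .
  qed
  then have "6 * eta^2 * real L * phi^2 * (norm Phi)^2 * (\<Sum>s<Suc t. ?q^s) \<le> 6 * eta^2 * real L * phi^2 * (norm Phi)^2 * (2 / eta)"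
    by (intro mult_left_mono) auto
  also have "\<dots> = 12 * eta * real L * phi^2 * (norm Phi)^2" using eta0 by (simp add: power2_eq_square)
  also have "\<dots> \<le> 12 * eta * real L * phi^2 * (phi^2 / 4)"
  proof (rule mult_left_mono)
    have "(2 * norm Phi)^2 \<le> phi^2" by (rule power_mono[OF p2]) simp
    then show "(norm Phi)^2 \<le> phi^2 / 4" by (simp add: power_mult_distrib)
  qed (use eta0 in simp)
  also have "\<dots> = 3 * (eta * real L^2 * phi^4) / real L" using L1 by (simp add: power2_eq_square power4_eq_xxxx)
  also have "\<dots> \<le> 3 * (1/144) / real L" using e1 L1 by (intro divide_right_mono) auto
  also have "\<dots> = 1 / (48 * real L)" by simp
  finally show ?thesis .
qed

theorem theorem2:
  fixes Phi :: "real ^ 'n::finite ^ 'n" and L :: nat and eta phi :: real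
  assumes "L \<ge> 1"
    and "eta > 0"
    and "phi = max (2 * frob Phi) (max (3 / sqrt (real L)) 1)"
    and "eta \<le> min (1 / (4 * real L ^ 3 * phi ^ 6)) (1 / (144 * real L ^ 2 * phi ^ 4))"
  shows "\<forall>t. loss L Phi (gd eta L Phi t) \<le> (1 - eta / 2) ^ t * loss L Phi (gd eta L Phi 0)"
proof -
  note L1 = assms(1) and eta0 = assms(2) and phidef = assms(3) and etab = assms(4)
  note pf = phi_facts[OF L1 phidef]
  note ef = eta_facts[OF L1 pf(1) eta0 etab]
  let ?q = "1 - eta / 2"
  let ?E = "\<lambda>s. prodW (gd eta L Phi s) L 1 - Phi"
  let ?C = "\<lambda>s. (norm (?E s))^2 \<le> ?q^s * (norm Phi)^2
        \<and> (\<Sum>l\<in>{1..L}. (norm (grad L Phi (gd eta L Phi s) l))^2) \<le> 3 * real L * phi^2 * (norm (?E s))^2"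
  have es: "eta \<le> 1"
  proof -
    have "1 \<le> real L^2" "1 \<le> phi^4" using L1 pf(1) by (auto simp: one_le_power)
    then have "1 * 1 \<le> real L^2 * phi^4" by (intro mult_mono) auto
    then have "1 \<le> real L^2 * phi^4" by simp
    then have "eta * 1 \<le> eta * (real L^2 * phi^4)" using eta0 by (intro mult_left_mono) auto
    then show ?thesis using ef(1) by (simp add: mult_ac)
  qed
  have q0: "0 \<le> ?q" "?q \<le> 1" using es eta0 by auto
  have E0: "?E 0 = - Phi" using gd0_prod[OF L1] by simp
  have good_at: "(\<Sum>l\<in>{1..L}. (norm (grad L Phi (gd eta L Phi s) l))^2) \<le> 3 * real L * phi^2 * (norm (?E s))^2
      \<and> (norm (?E (Suc s)))^2 \<le> ?q * (norm (?E s))^2"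
    if dr: "ps L (drf eta L Phi s) 1 \<le> 1 / (48 * real L)" and Eb: "norm (?E s) \<le> norm Phi" for s
  proof -
    have gs: "gd eta L Phi (Suc s) = (\<lambda>j. gd eta L Phi s j - eta *\<^sub>R grad L Phi (gd eta L Phi s) j)" by simp
    show ?thesis
      using good[OF L1 invar_all drf_nonneg dr Eb phidef eta0 etab] unfolding gs by simp
  qed
  have C: "\<forall>s\<le>t. ?C s" for t
  proof (induction t)
    case 0
    have dr0: "ps L (drf eta L Phi 0) 1 \<le> 1 / (48 * real L)" unfolding ps_def drf_def by simp
    have "norm (?E 0) \<le> norm Phi" using E0 by simp
    then show ?case using good_at[OF dr0] E0 by simp
  next
    case (Suc t)
    have drS: "ps L (drf eta L Phi (Suc t)) 1 \<le> 1 / (48 * real L)"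
      by (rule drift_sum[OF L1 eta0 es pf(1) pf(2) ef(1)]) (use Suc.IH in auto)
    have drt: "ps L (drf eta L Phi t) 1 \<le> 1 / (48 * real L)" using ps_mono_t drS order_trans by blast
    have Ct: "?C t" using Suc.IH by simp
    have Ebt: "norm (?E t) \<le> norm Phi"
    proof -
      have "(norm (?E t))^2 \<le> 1 * (norm Phi)^2"
        using Ct q0 by (meson mult_right_mono order_trans power_le_one zero_le_power2)
      then show ?thesis by (simp add: power2_le_iff_abs_le abs_le_square_iff)
    qed
    have step: "(norm (?E (Suc t)))^2 \<le> ?q * (norm (?E t))^2" using good_at[OF drt Ebt] by simp
    have CS1: "(norm (?E (Suc t)))^2 \<le> ?q^Suc t * (norm Phi)^2"
    proof -
      have "(norm (?E (Suc t)))^2 \<le> ?q * (?q^t * (norm Phi)^2)"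
        using step Ct q0 by (meson mult_left_mono order_trans)
      then show ?thesis by (simp add: mult_ac)
    qed
    have EbS: "norm (?E (Suc t)) \<le> norm Phi"
    proof -
      have "(norm (?E (Suc t)))^2 \<le> 1 * (norm Phi)^2"
        using CS1 q0 by (meson mult_right_mono order_trans power_le_one zero_le_power2)
      then show ?thesis by (simp add: power2_le_iff_abs_le abs_le_square_iff)
    qed
    have CS2: "(\<Sum>l\<in>{1..L}. (norm (grad L Phi (gd eta L Phi (Suc t)) l))^2) \<le> 3 * real L * phi^2 * (norm (?E (Suc t)))^2"
      using good_at[OF drS EbS] by simp
    show ?case using Suc.IH CS1 CS2 le_Suc_eq by auto
  qed
  show ?thesis
  proof
    fix t
    have "(norm (?E t))^2 \<le> ?q^t * (norm Phi)^2" using C[of t] by simp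
    then have "1/2 * (norm (?E t))^2 \<le> ?q^t * (1/2 * (norm Phi)^2)" by simp
    then show "loss L Phi (gd eta L Phi t) \<le> ?q ^ t * loss L Phi (gd eta L Phi 0)"
      unfolding loss_def frob_eq_norm using E0 by simp
  qed
qed


end
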